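(* Let $G$ be a $3$-dimensional unimodular Lie group, with Lie algebra $\mathfrak{g}$. There is a left-invariant $B_{3}$-generalized pseudo-Kähler structure $(\mathcal{G}, \mathcal F)$ on a Courant algebroid $E= E_{H, F}$ of type $B_3$ over $G$, with components $(g, J_{+}, J_{-}, X_{+}, X_{-})$, such that the operator $L\in \mathrm{End}(\mathfrak{g})$ associated to $g$ is diagonalizable, if and only if one of the following two cases holds: i) there is a $g$-orthonormal basis $\{ v_{1}, v_{2}, v_{3} \}$ of $\mathfrak{g}$, such that $g(v_{2}, v_{2}) =1$, in which the Lie bracket of $\mathfrak{g}$ is given by \[ [v_{1}, v_{2} ] = \epsilon_{3} \lambda v_{3},\quad [ v_{3}, v_{1} ] =0,\quad [v_{2}, v_{3} ] = \epsilon_{1}\lambda v_{1}, \] where $\epsilon_{i}:= g( v_{i}, v_{i})\in \{ \pm 1\}$ ($i\in \{ 1,3\}$), $\lambda \in \mathbb{R}\setminus \{ 0\}$, $X_{-} = v_{2}$ and $X_{+} = \pm X_{-}$. In particular, $\mathfrak g$ is isomorphic to the Lie algebra of Killing fields of Euclidean or Minkowskian $2$-space, $\mathfrak{g}\cong \mathfrak{iso}(2)= \mathfrak{so}(2) \ltimes \mathbb{R}^2$ or $\mathfrak{g} \cong \mathfrak{iso}(1,1)=\mathfrak{so}(1,1)\ltimes \mathbb{R}^2$, depending on whether $\epsilon_1\epsilon_3=1$ or $\epsilon_1\epsilon_3=-1$. ii) $\mathfrak{g}$ is abelian, $g$ is an arbitrary (non-degenerate) metric on $\mathfrak{g}$ and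 $X_{\pm}\in \mathfrak{g}$ are arbitrary space-like unit vectors, i.e. $g(X_\pm ,X_\pm )=1$. In both cases $H =0$, $F =0$ and $J_{\pm}\in \mathrm{End} (\mathfrak{g})$ are arbitrary $g$-skew-symmetric endomorphisms, which satisfy $J_{\pm}X_{\pm} =0$ and are complex structures on $X_{\pm}^{\perp}$.
   Context: A Courant algebroid $E_{H,F}$ of type $B_n$ over an $n$-dimensional manifold $M$ is $TM\oplus T^*M\oplus\mathbb{R}$ with scalar product $\langle X+\xi+\lambda, Y+\eta+\mu\rangle=\frac12(\eta(X)+\xi(Y))+\lambda\mu$, anchor the projection to $TM$, and Dorfman bracket twisted by a closed $2$-form $F$ and a $3$-form $H$ with $dH=-F\wedge F$. A $B_n$-generalized pseudo-Kähler structure $(\mathcal{G},\mathcal F)$ is a generalized metric $\mathcal G$ together with a $B_n$-generalized almost complex structure $\mathcal F$ commuting with $\mathcal G^{\mathrm{end}}$, such that $\mathcal F$ and $\mathcal G^{\mathrm{end}}\mathcal F$ are integrable. For $n$ odd (here $n=3$), with $\mathcal G$ in standard form, such a structure is encoded by its components $(g,J_+,J_-,X_+,X_-)$: $g$ a pseudo-Riemannian metric on $M$, $J_\pm$ $g$-skew-symmetric endomorphisms of $TM$, $X_\pm$ vector fields with $g(X_\pm,X_\pm)=1$, $J_\pm X_\pm=0$, and $J_\pm$ restricted to the $g$-orthogonal complement $X_\pm^\perp$ a complex structure. On a Lie group $G$, $E_{H,F}$ is left-invariant if $H,F$ are left-invariant, and the structure is left-invariant if moreover its components are left-invariant tensor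 fields (identified with tensors on $\mathfrak g$). For a $3$-dimensional Lie algebra $\mathfrak g$ with non-degenerate metric $g$ and a chosen orientation, the canonical operator $L\in\mathrm{End}(\mathfrak g)$ is defined by $[u,v]=L(u\times v)$ for all $u,v\in\mathfrak g$, where $\times$ is the cross product determined by $g$ and the orientation ($L$ is unique up to sign); $\mathfrak g$ is unimodular iff $L$ is self-adjoint. *)

theory Defs
  imports "HOL-Analysis.Analysis"
begin

text \<open>
  Everything is left-invariant, hence encoded on the Lie algebra g = R^3 (type real^3).
  Covectors (left-invariant 1-forms) are also encoded as elements of real^3, acting by the
  standard dot product: xi(X) = xi \<bullet> X.  Left-invariant sections of E = TM + T*M + R are
  therefore elements of real^3 \<times> real^3 \<times> real.
\<close>

type_synonym vec3 = "real^3"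
type_synonym sec = "vec3 \<times> vec3 \<times> real"

definition lie_algebra3 :: "(vec3 \<Rightarrow> vec3 \<Rightarrow> vec3) \<Rightarrow> bool" where
  "lie_algebra3 br \<longleftrightarrow> bilinear br \<and> (\<forall>x. br x x = 0) \<and>
     (\<forall>x y z. br x (br y z) + br y (br z x) + br z (br x y) = 0)"

definition unimodular3 :: "(vec3 \<Rightarrow> vec3 \<Rightarrow> vec3) \<Rightarrow> bool" where
  "unimodular3 br \<longleftrightarrow> (\<forall>x. trace (matrix (br x)) = 0)"

definition metric3 :: "real^3^3 \<Rightarrow> bool" where
  "metric3 Gm \<longleftrightarrow> transpose Gm = Gm \<and> invertible Gm"

definition gm :: "real^3^3 \<Rightarrow> vec3 \<Rightarrow> vec3 \<Rightarrow> real" where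
  "gm Gm u v = u \<bullet> (Gm *v v)"

text \<open>metric volume form for the standard orientation\<close>
definition vol_g :: "real^3^3 \<Rightarrow> vec3 \<Rightarrow> vec3 \<Rightarrow> vec3 \<Rightarrow> real" where
  "vol_g Gm u v w = det (vector [u, v, w] :: real^3^3) / sqrt \<bar>det Gm\<bar>"

text \<open>cross product: g(u \<times> v, w) = vol_g(u,v,w)\<close>
definition cross_g :: "real^3^3 \<Rightarrow> vec3 \<Rightarrow> vec3 \<Rightarrow> vec3" where
  "cross_g Gm u v = matrix_inv Gm *v (\<chi> k. vol_g Gm u v (axis k 1))"

definition canonical_L :: "(vec3 \<Rightarrow> vec3 \<Rightarrow> vec3) \<Rightarrow> real^3^3 \<Rightarrow> vec3 \<Rightarrow> vec3" where
  "canonical_L br Gm = (THE L. linear L \<and> (\<forall>u v. br u v = L (cross_g Gm u v)))"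

definition diagonalizable3 :: "(vec3 \<Rightarrow> vec3) \<Rightarrow> bool" where
  "diagonalizable3 L \<longleftrightarrow> (\<exists>v :: 3 \<Rightarrow> vec3. inj v \<and> independent (range v) \<and>
      (\<forall>i. \<exists>c. L (v i) = c *\<^sub>R v i))"

definition alt2 :: "(vec3 \<Rightarrow> vec3 \<Rightarrow> real) \<Rightarrow> bool" where
  "alt2 F \<longleftrightarrow> bilinear F \<and> (\<forall>x. F x x = 0)"

definition alt3 :: "(vec3 \<Rightarrow> vec3 \<Rightarrow> vec3 \<Rightarrow> real) \<Rightarrow> bool" where
  "alt3 H \<longleftrightarrow> (\<forall>x y. linear (\<lambda>z. H x y z)) \<and> (\<forall>x z. linear (\<lambda>y. H x y z)) \<and>
     (\<forall>y z. linear (\<lambda>x. H x y z)) \<and> (\<forall>x z. H x x z = 0) \<and> (\<forall>x y. H x y y = 0)"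

text \<open>dF = 0 for a left-invariant 2-form (Chevalley-Eilenberg differential)\<close>
definition closed2 :: "(vec3 \<Rightarrow> vec3 \<Rightarrow> vec3) \<Rightarrow> (vec3 \<Rightarrow> vec3 \<Rightarrow> real) \<Rightarrow> bool" where
  "closed2 br F \<longleftrightarrow> (\<forall>x y z. F (br x y) z + F (br y z) x + F (br z x) y = 0)"

definition pairing :: "sec \<Rightarrow> sec \<Rightarrow> real" where
  "pairing u v = (case u of (X, xi, l) \<Rightarrow> case v of (Y, eta, m) \<Rightarrow>
      (eta \<bullet> X + xi \<bullet> Y) / 2 + l * m)"

text \<open>Twisted Dorfman bracket of left-invariant sections (all functions constant, so the
  terms X(m), Y(l), l dm vanish; L_X eta = i_X d eta; d xi (A,B) = - xi([A,B])).\<close>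
definition dorfman :: "(vec3 \<Rightarrow> vec3 \<Rightarrow> vec3) \<Rightarrow> (vec3 \<Rightarrow> vec3 \<Rightarrow> vec3 \<Rightarrow> real)
    \<Rightarrow> (vec3 \<Rightarrow> vec3 \<Rightarrow> real) \<Rightarrow> sec \<Rightarrow> sec \<Rightarrow> sec" where
  "dorfman br H F u v = (case u of (X, xi, l) \<Rightarrow> case v of (Y, eta, m) \<Rightarrow>
      (br X Y,
       (\<chi> k. - (eta \<bullet> br X (axis k 1)) + xi \<bullet> br Y (axis k 1) + H X Y (axis k 1)
             + 2 * m * F X (axis k 1) - 2 * l * F Y (axis k 1)),
       - F X Y))"

definition gen_metric :: "(sec \<Rightarrow> sec) \<Rightarrow> bool" where
  "gen_metric Ge \<longleftrightarrow> linear Ge \<and> (\<forall>u. Ge (Ge u) = u) \<and>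
     (\<forall>u v. pairing (Ge u) v = pairing u (Ge v))"

definition std_gen_metric :: "real^3^3 \<Rightarrow> sec \<Rightarrow> sec" where
  "std_gen_metric Gm u = (case u of (X, xi, l) \<Rightarrow> (matrix_inv Gm *v xi, Gm *v X, l))"

definition Bn_gacs :: "(sec \<Rightarrow> sec) \<Rightarrow> bool" where
  "Bn_gacs P \<longleftrightarrow> linear P \<and> (\<forall>u v. pairing (P u) v = - pairing u (P v)) \<and>
     (\<forall>u. P (P (P u)) = - P u) \<and> dim {u. P u = 0} = 1 \<and>
     (\<forall>u. P u = 0 \<and> u \<noteq> 0 \<longrightarrow> pairing u u \<noteq> 0)"

text \<open>Integrability: the +i-eigenbundle L = {x - i P x | x \<in> range P} of the complexification
  is closed under the (complexified) Dorfman bracket; written out in real terms.\<close>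
definition Bn_integrable :: "(vec3 \<Rightarrow> vec3 \<Rightarrow> vec3) \<Rightarrow> (vec3 \<Rightarrow> vec3 \<Rightarrow> vec3 \<Rightarrow> real)
    \<Rightarrow> (vec3 \<Rightarrow> vec3 \<Rightarrow> real) \<Rightarrow> (sec \<Rightarrow> sec) \<Rightarrow> bool" where
  "Bn_integrable br H F P \<longleftrightarrow> (\<forall>x y. x \<in> range P \<and> y \<in> range P \<longrightarrow>
     (let w = dorfman br H F x y - dorfman br H F (P x) (P y) in
        w \<in> range P \<and> P w = dorfman br H F (P x) y + dorfman br H F x (P y)))"

definition Bn_gen_pseudo_Kahler :: "(vec3 \<Rightarrow> vec3 \<Rightarrow> vec3) \<Rightarrow> (vec3 \<Rightarrow> vec3 \<Rightarrow> vec3 \<Rightarrow> real)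
    \<Rightarrow> (vec3 \<Rightarrow> vec3 \<Rightarrow> real) \<Rightarrow> (sec \<Rightarrow> sec) \<Rightarrow> (sec \<Rightarrow> sec) \<Rightarrow> bool" where
  "Bn_gen_pseudo_Kahler br H F Ge P \<longleftrightarrow> gen_metric Ge \<and> Bn_gacs P \<and> Ge \<circ> P = P \<circ> Ge \<and>
     Bn_integrable br H F P \<and> Bn_integrable br H F (Ge \<circ> P)"

definition components_ok :: "real^3^3 \<Rightarrow> real^3^3 \<Rightarrow> real^3^3 \<Rightarrow> vec3 \<Rightarrow> vec3 \<Rightarrow> bool" where
  "components_ok Gm Jp Jm Xp Xm \<longleftrightarrow> metric3 Gm \<and>
     (\<forall>u v. gm Gm (Jp *v u) v = - gm Gm u (Jp *v v)) \<and>
     (\<forall>u v. gm Gm (Jm *v u) v = - gm Gm u (Jm *v v)) \<and>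
     gm Gm Xp Xp = 1 \<and> gm Gm Xm Xm = 1 \<and> Jp *v Xp = 0 \<and> Jm *v Xm = 0 \<and>
     (\<forall>u. gm Gm u Xp = 0 \<longrightarrow> Jp *v (Jp *v u) = - u) \<and>
     (\<forall>u. gm Gm u Xm = 0 \<longrightarrow> Jm *v (Jm *v u) = - u)"

text \<open>With V_+ = {X + gX + l} and V_- = {X - gX}: on V_-, F(X - gX) = J_-X - gJ_-X;
  on V_+, F(X + gX) = J_+X + gJ_+X - g(X_+,X), F(1) = X_+ + gX_+.
  A section (X, xi, l) decomposes as (A + gA) + (B - gB) + l with
  A = (X + g^{-1}xi)/2, B = (X - g^{-1}xi)/2.\<close>
definition struct_of_components :: "real^3^3 \<Rightarrow> real^3^3 \<Rightarrow> real^3^3 \<Rightarrow> vec3 \<Rightarrow> vec3 \<Rightarrow> sec \<Rightarrow> sec" where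
  "struct_of_components Gm Jp Jm Xp Xm u = (case u of (X, xi, l) \<Rightarrow>
     (let A = (1/2) *\<^sub>R (X + matrix_inv Gm *v xi); B = (1/2) *\<^sub>R (X - matrix_inv Gm *v xi) in
       (Jp *v A + Jm *v B + l *\<^sub>R Xp,
        Gm *v (Jp *v A - Jm *v B + l *\<^sub>R Xp),
        - gm Gm Xp A)))"

end

theory Submission
  imports Defs
begin

lemma gm_sym: assumes "transpose G = G" shows "gm G x y = gm G y x"
  unfolding gm_def by (metis assms dot_lmul_matrix inner_commute transpose_matrix_vector)

lemma mv_neg[simp]: "(A::real^'n^'m) *v (- x) = - (A *v x)"
  using matrix_vector_mult_diff_distrib[of A 0 x] by simp

lemma gm_add1[simp]: "gm G (x + y) z = gm G x z + gm G y z"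
  and gm_add2[simp]: "gm G x (y + z) = gm G x y + gm G x z"
  and gm_scale1[simp]: "gm G (c *\<^sub>R x) z = c * gm G x z"
  and gm_scale2[simp]: "gm G x (c *\<^sub>R z) = c * gm G x z"
  and gm_neg1[simp]: "gm G (- x) z = - gm G x z"
  and gm_neg2[simp]: "gm G x (- z) = - gm G x z"
  and gm_diff1[simp]: "gm G (x - y) z = gm G x z - gm G y z"
  and gm_diff2[simp]: "gm G x (y - z) = gm G x y - gm G x z"
  and gm_zero1[simp]: "gm G 0 z = 0"
  and gm_zero2[simp]: "gm G x 0 = 0"
  unfolding gm_def
  by (simp_all add: inner_add_left inner_add_right matrix_vector_right_distrib
      matrix_vector_mult_diff_distrib inner_diff_left inner_diff_right matrix_vector_mult_scaleR)

lemma covector_eval: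
  assumes "linear f"
  shows "(\<chi> k. f (axis k 1)) \<bullet> (z::real^'n) = f z"
proof -
  have "f z = f (\<Sum>i\<in>UNIV. (z$i) *\<^sub>R axis i 1)"
    using basis_expansion[of z] by (simp add: scalar_mult_eq_scaleR)
  also have "\<dots> = (\<Sum>i\<in>UNIV. (z$i) * f (axis i 1))"
    using assms by (simp add: linear_sum linear_scale)
  finally show ?thesis by (simp add: inner_vec_def mult.commute)
qed



lemma mneg_mv[simp]: "(- (A::real^'n^'m)) *v x = - (A *v x)"
  by (simp add: matrix_vector_mult_def vec_eq_iff sum_negf)

lemma bil_skew: assumes "bilinear b" "\<forall>x. b x x = 0" shows "b y x = - b x y"
proof -
  have "b (x + y) (x + y) = 0" "b x x = 0" "b y y = 0" using assms by blast+
  then show ?thesis using assms(1)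
    by (simp add: bilinear_ladd bilinear_radd algebra_simps eq_neg_iff_add_eq_0)
qed

lemma alt2_skew: "alt2 F \<Longrightarrow> F y x = - F x y"
  unfolding alt2_def using bil_skew by blast

lemma alt3_lin1: "alt3 H \<Longrightarrow> H (x + x') y z = H x y z + H x' y z"
  and alt3_lin2: "alt3 H \<Longrightarrow> H x (y + y') z = H x y z + H x y' z"
  and alt3_lin3: "alt3 H \<Longrightarrow> H x y (z + z') = H x y z + H x y z'"
  and alt3_sc1: "alt3 H \<Longrightarrow> H (c *\<^sub>R x) y z = c * H x y z"
  and alt3_sc2: "alt3 H \<Longrightarrow> H x (c *\<^sub>R y) z = c * H x y z"
  and alt3_sc3: "alt3 H \<Longrightarrow> H x y (c *\<^sub>R z) = c * H x y z"
  unfolding alt3_def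
  by (auto simp: linear_add[of "\<lambda>x. H x y z"] linear_add[of "\<lambda>y. H x y z"]
      linear_add[of "\<lambda>z. H x y z"] linear_scale[of "\<lambda>x. H x y z"]
      linear_scale[of "\<lambda>y. H x y z"] linear_scale[of "\<lambda>z. H x y z"])

lemma alt3_neg1: "alt3 H \<Longrightarrow> H (- x) y z = - H x y z"
  and alt3_neg2: "alt3 H \<Longrightarrow> H x (- y) z = - H x y z"
  and alt3_neg3: "alt3 H \<Longrightarrow> H x y (- z) = - H x y z"
  using alt3_sc1[of H "-1" x y z] alt3_sc2[of H x "-1" y z] alt3_sc3[of H x y "-1" z] by auto

lemma alt3_swap12: assumes "alt3 H" shows "H y x z = - H x y z"
proof -
  have "H (x + y) (x + y) z = 0" using assms unfolding alt3_def by blast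
  moreover have "H x x z = 0" "H y y z = 0" using assms unfolding alt3_def by blast+
  ultimately show ?thesis using assms by (simp add: alt3_lin1 alt3_lin2)
qed

lemma alt3_swap23: assumes "alt3 H" shows "H x z y = - H x y z"
proof -
  have "H x (y + z) (y + z) = 0" using assms unfolding alt3_def by blast
  moreover have "H x y y = 0" "H x z z = 0" using assms unfolding alt3_def by blast+
  ultimately show ?thesis using assms by (simp add: alt3_lin2 alt3_lin3)
qed

lemma phi_gen:
  assumes br: "bilinear br" and H: "alt3 H" and F: "alt2 F"
  shows "pairing (dorfman br H F (X, xi, l) (Y, eta, m)) (Z, zeta, n) =
    (zeta \<bullet> br X Y - eta \<bullet> br X Z + xi \<bullet> br Y Z + H X Y Z) / 2
     + m * F X Z - l * F Y Z - n * F X Y"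
proof -
  let ?f = "\<lambda>z. - (eta \<bullet> br X z) + xi \<bullet> br Y z + H X Y z + 2 * m * F X z - 2 * l * F Y z"
  have lbr: "linear (br a)" for a using br unfolding bilinear_def by blast
  have lF: "linear (F a)" for a using F unfolding alt2_def bilinear_def by blast
  have "linear ?f"
    by (rule linearI) (simp_all add: linear_add[OF lbr] linear_scale[OF lbr]
        linear_add[OF lF] linear_scale[OF lF] alt3_lin3[OF H] alt3_sc3[OF H]
        inner_add_right algebra_simps)
  then have ce: "(\<chi> k. ?f (axis k 1)) \<bullet> Z = ?f Z" by (rule covector_eval)
  show ?thesis
    unfolding dorfman_def pairing_def
    by (simp only: prod.case ce) (simp add: field_simps)
qed



definition Sp :: "real^3^3 \<Rightarrow> vec3 \<Rightarrow> real \<Rightarrow> sec" where "Sp G A l = (A, G *v A, l)"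
definition Tv :: "real^3^3 \<Rightarrow> vec3 \<Rightarrow> sec" where "Tv G B = (B, - (G *v B), 0)"

locale met =
  fixes Gm :: "real^3^3"
  assumes metric: "metric3 Gm"
begin

lemma Gsym: "transpose Gm = Gm" and Ginvertible: "invertible Gm"
  using metric unfolding metric3_def by auto

lemma gsym: "gm Gm x y = gm Gm y x" using gm_sym[OF Gsym] .

lemma Ginv_both: "Gm ** matrix_inv Gm = mat 1 \<and> matrix_inv Gm ** Gm = mat 1"
  using Ginvertible unfolding invertible_def matrix_inv_def by (rule someI_ex)

lemma Ginv1[simp]: "matrix_inv Gm *v (Gm *v x) = x"
  by (simp add: matrix_vector_mul_assoc Ginv_both)
lemma Ginv2[simp]: "Gm *v (matrix_inv Gm *v x) = x"
  by (simp add: matrix_vector_mul_assoc Ginv_both)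

lemma ipG: "a \<bullet> (Gm *v b) = gm Gm a b" unfolding gm_def ..

lemma ginv1: "gm Gm u (matrix_inv Gm *v xi) = u \<bullet> xi"
  unfolding gm_def by simp
lemma ginv2: "gm Gm (matrix_inv Gm *v xi) u = xi \<bullet> u"
  using ginv1 gsym by (metis inner_commute)

lemma G_inj: "Gm *v x = Gm *v y \<Longrightarrow> x = y"
  by (metis Ginv1)

lemma g_nondeg: assumes "\<forall>y. gm Gm x y = 0" shows "x = 0"
proof -
  have "gm Gm x (matrix_inv Gm *v x) = 0" using assms by blast
  then have "x \<bullet> x = 0" unfolding gm_def by simp
  then show ?thesis by simp
qed

lemma dotG: "(Gm *v a) \<bullet> b = gm Gm a b"
  unfolding gm_def by (metis gsym gm_def inner_commute)

lemma pairing_SS: "pairing (Sp Gm A l) (Sp Gm A' l') = gm Gm A A' + l * l'"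
  unfolding pairing_def Sp_def by (simp add: dotG ipG gsym[of A' A])
lemma pairing_TT: "pairing (Tv Gm A) (Tv Gm A') = - gm Gm A A'"
  unfolding pairing_def Tv_def by (simp add: dotG ipG gsym[of A' A])
lemma pairing_ST: "pairing (Sp Gm A l) (Tv Gm A') = 0"
  unfolding pairing_def Tv_def Sp_def by (simp add: dotG ipG gsym[of A' A])
lemma pairing_TS: "pairing (Tv Gm A') (Sp Gm A l) = 0"
  unfolding pairing_def Tv_def Sp_def by (simp add: dotG ipG gsym[of A' A])

lemma decomp: "(X, xi, l) = Sp Gm ((1/2) *\<^sub>R (X + matrix_inv Gm *v xi)) l
     + Tv Gm ((1/2) *\<^sub>R (X - matrix_inv Gm *v xi))"
  unfolding Sp_def Tv_def
  by (simp add: matrix_vector_mult_scaleR matrix_vector_right_distrib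
      matrix_vector_mult_diff_distrib algebra_simps scaleR_2[symmetric])

lemma Ge_Sp: "std_gen_metric Gm (Sp Gm A l) = Sp Gm A l"
  unfolding std_gen_metric_def Sp_def by simp
lemma Ge_Tv: "std_gen_metric Gm (Tv Gm B) = Tv Gm (- B)"
  unfolding std_gen_metric_def Tv_def by simp

end

locale jx = met +
  fixes J :: "real^3^3" and X :: vec3
  assumes skew: "\<And>u v. gm Gm (J *v u) v = - gm Gm u (J *v v)"
    and XX: "gm Gm X X = 1" and JX: "J *v X = 0"
    and Jsq: "\<And>u. gm Gm u X = 0 \<Longrightarrow> J *v (J *v u) = - u"
begin

lemma skew2: "gm Gm u (J *v v) = - gm Gm (J *v u) v"
  using skew[of u v] by simp

lemma gJX: "gm Gm (J *v u) X = 0"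
  using skew[of u X] JX by simp

lemma gJuu: "gm Gm (J *v u) u = 0"
  using skew[of u u] gsym[of "J *v u" u] by simp

lemma JJ: "J *v (J *v u) = - u + gm Gm u X *\<^sub>R X"
proof -
  let ?u = "u - gm Gm u X *\<^sub>R X"
  have "gm Gm ?u X = 0" using XX by simp
  then have "J *v (J *v ?u) = - ?u" by (rule Jsq)
  then show ?thesis
    by (simp add: matrix_vector_mult_diff_distrib matrix_vector_mult_scaleR JX)
qed

lemma gJJ: "gm Gm (J *v u) (J *v v) = gm Gm u v - gm Gm u X * gm Gm v X"
  using skew[of u "J *v v"] JJ[of v] by (simp add: gsym[of X u] gsym[of v u])

end

lemma jx_neg: "jx Gm J X \<Longrightarrow> jx Gm (- J) X"
  unfolding jx_def jx_axioms_def by (auto simp: met_def)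

lemma comps_jx: assumes "components_ok Gm Jp Jm Xp Xm"
  shows "jx Gm Jp Xp" "jx Gm Jm Xm" "met Gm"
  using assms unfolding components_ok_def jx_def jx_axioms_def met_def by auto

lemma comps_neg: "components_ok Gm Jp Jm Xp Xm \<Longrightarrow> components_ok Gm Jp (- Jm) Xp Xm"
  unfolding components_ok_def by auto



lemma pairing_add1: "pairing (a + b) z = pairing a z + pairing b z"
  by (cases a, cases b, cases z) (simp add: pairing_def inner_add_left inner_add_right field_simps)
lemma pairing_diff1: "pairing (a - b) z = pairing a z - pairing b z"
  by (cases a, cases b, cases z) (simp add: pairing_def inner_diff_left inner_diff_right field_simps)
lemma pairing_zero2: "pairing a (0, 0, 0) = 0"
  by (cases a) (simp add: pairing_def)

locale cs =
  fixes Gm Jp Jm :: "real^3^3" and Xp Xm :: vec3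
  assumes comps: "components_ok Gm Jp Jm Xp Xm"
begin

sublocale met Gm using comps_jx[OF comps] by simp
sublocale p: jx Gm Jp Xp using comps_jx[OF comps] by simp
sublocale m: jx Gm Jm Xm using comps_jx[OF comps] by simp

abbreviation "P \<equiv> struct_of_components Gm Jp Jm Xp Xm"

lemma P_Sp: "P (Sp Gm A l) = Sp Gm (Jp *v A + l *\<^sub>R Xp) (- gm Gm Xp A)"
  unfolding struct_of_components_def Sp_def
  by (simp add: scaleR_2[symmetric] matrix_vector_mult_scaleR scaleR_add_right[symmetric]
      del: scaleR_add_right)

lemma P_Tv: "P (Tv Gm B) = Tv Gm (Jm *v B)"
  unfolding struct_of_components_def Tv_def
  by (simp add: scaleR_2[symmetric] matrix_vector_mult_scaleR)

lemma Ge_P: "std_gen_metric Gm \<circ> P = struct_of_components Gm Jp (- Jm) Xp Xm"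
  by (rule ext) (simp add: struct_of_components_def std_gen_metric_def Let_def split: prod.splits)

lemma pairing_P_Tv: "pairing (P w) (Tv Gm C) = - pairing w (Tv Gm (Jm *v C))"
proof (cases w)
  case (fields X xi l)
  define A where "A = (1/2) *\<^sub>R (X + matrix_inv Gm *v xi)"
  define B where "B = (1/2) *\<^sub>R (X - matrix_inv Gm *v xi)"
  have Pw: "P w = (Jp *v A + Jm *v B + l *\<^sub>R Xp, Gm *v (Jp *v A - Jm *v B + l *\<^sub>R Xp), - gm Gm Xp A)"
    unfolding fields struct_of_components_def A_def B_def Let_def by simp
  have "pairing (P w) (Tv Gm C) = (gm Gm (Jp *v A - Jm *v B + l *\<^sub>R Xp) C - gm Gm C (Jp *v A + Jm *v B + l *\<^sub>R Xp)) / 2"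
    unfolding Pw Tv_def pairing_def by (simp add: dotG ipG)
  also have "\<dots> = - gm Gm (Jm *v B) C"
    by (simp add: gsym[of C]) 
  also have "\<dots> = gm Gm B (Jm *v C)" by (simp add: m.skew2)
  also have "\<dots> = (gm Gm X (Jm *v C) - xi \<bullet> (Jm *v C)) / 2"
    unfolding B_def by (simp add: ginv2)
  also have "\<dots> = - pairing w (Tv Gm (Jm *v C))"
    unfolding fields Tv_def pairing_def by (simp add: dotG ipG gsym[of X] field_simps)
  finally show ?thesis .
qed

end


lemma pairing_Tv_neg: "pairing a (Tv G (- c)) = - pairing a (Tv G c)"
  by (cases a) (simp add: pairing_def Tv_def field_simps)

context cs begin

lemma Sp_range: "Sp Gm A l \<in> range P"
proof
  show "Sp Gm A l = P (Sp Gm (- (Jp *v A) - l *\<^sub>R Xp) (gm Gm Xp A))"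
    unfolding P_Sp
    by (simp add: matrix_vector_mult_diff_distrib matrix_vector_mult_scaleR p.JJ p.JX
        p.skew2 p.XX gsym[of A Xp])
qed simp

lemma Tv_range: assumes "gm Gm B Xm = 0" shows "Tv Gm B \<in> range P"
proof
  show "Tv Gm B = P (Tv Gm (- (Jm *v B)))"
    unfolding P_Tv using m.Jsq[OF assms] by simp
qed simp

lemma int_cons:
  assumes I: "Bn_integrable br H F P" and x: "x \<in> range P" and y: "y \<in> range P"
  shows "pairing (dorfman br H F x y - dorfman br H F (P x) (P y)) (Tv Gm Xm) = 0"
    and "pairing (dorfman br H F (P x) y + dorfman br H F x (P y)) (Tv Gm C) =
         - pairing (dorfman br H F x y - dorfman br H F (P x) (P y)) (Tv Gm (Jm *v C))"
proof -
  let ?w = "dorfman br H F x y - dorfman br H F (P x) (P y)"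
  have w: "?w \<in> range P" and Pw: "P ?w = dorfman br H F (P x) y + dorfman br H F x (P y)"
    using I x y unfolding Bn_integrable_def Let_def by blast+
  from w obtain q where q: "?w = P q" by blast
  have "Tv Gm (Jm *v Xm) = (0, 0, 0)" by (simp add: m.JX Tv_def)
  then show "pairing ?w (Tv Gm Xm) = 0"
    unfolding q pairing_P_Tv by (simp add: pairing_zero2)
  show "pairing (dorfman br H F (P x) y + dorfman br H F x (P y)) (Tv Gm C) =
         - pairing ?w (Tv Gm (Jm *v C))"
    unfolding Pw[symmetric] pairing_P_Tv ..
qed

end

locale csd = cs +
  fixes br :: "vec3 \<Rightarrow> vec3 \<Rightarrow> vec3" and H :: "vec3 \<Rightarrow> vec3 \<Rightarrow> vec3 \<Rightarrow> real"
    and F :: "vec3 \<Rightarrow> vec3 \<Rightarrow> real"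
  assumes lie: "lie_algebra3 br" and Hf: "alt3 H" and Ff: "alt2 F"
begin

lemma brb: "bilinear br" and br_xx: "br x x = 0" using lie unfolding lie_algebra3_def by auto
lemma br_skew: "br y x = - br x y" using bil_skew[OF brb] br_xx by blast
lemma Fb: "bilinear F" and F_xx: "F x x = 0" using Ff unfolding alt2_def by auto

lemma phiTST: "pairing (dorfman br H F (Tv Gm c) (Sp Gm A l)) (Tv Gm C) =
   (- gm Gm C (br c A) - gm Gm A (br c C) - gm Gm c (br A C) + H c A C) / 2 + l * F c C"
  unfolding Tv_def Sp_def phi_gen[OF brb Hf Ff]
  by (simp add: dotG bilinear_lneg[OF brb] bilinear_rneg[OF brb] bilinear_lneg[OF Fb]
      alt3_neg1[OF Hf] field_simps)

lemma phiSST: "pairing (dorfman br H F (Sp Gm A1 l1) (Sp Gm A2 l2)) (Tv Gm C) =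
   (- gm Gm C (br A1 A2) - gm Gm A2 (br A1 C) + gm Gm A1 (br A2 C) + H A1 A2 C) / 2
   + l2 * F A1 C - l1 * F A2 C"
  unfolding Tv_def Sp_def phi_gen[OF brb Hf Ff]
  by (simp add: dotG field_simps)

lemma F1:
  assumes I1: "Bn_integrable br H F P"
    and I2: "Bn_integrable br H F (struct_of_components Gm Jp (- Jm) Xp Xm)"
    and B: "gm Gm B Xm = 0"
  shows "- gm Gm Xm (br B A) - gm Gm A (br B Xm) - gm Gm B (br A Xm) + H B A Xm + 2 * l * F B Xm = 0"
proof -
  interpret c2: cs Gm Jp "- Jm" Xp Xm using comps_neg[OF comps] by unfold_locales
  have e1: "pairing (dorfman br H F (Tv Gm B) (Sp Gm A l) - dorfman br H F (P (Tv Gm B)) (P (Sp Gm A l))) (Tv Gm Xm) = 0"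
    by (rule int_cons(1)[OF I1 Tv_range[OF B] Sp_range])
  have e2: "pairing (dorfman br H F (Tv Gm B) (Sp Gm A l) - dorfman br H F (c2.P (Tv Gm B)) (c2.P (Sp Gm A l))) (Tv Gm Xm) = 0"
    by (rule c2.int_cons(1)[OF I2 c2.Tv_range[OF B] c2.Sp_range])
  have q1: "c2.P (Sp Gm A l) = P (Sp Gm A l)" unfolding P_Sp c2.P_Sp ..
  have q2: "c2.P (Tv Gm B) = Tv Gm (- (Jm *v B))" unfolding c2.P_Tv by simp
  have e2': "pairing (dorfman br H F (Tv Gm B) (Sp Gm A l) + dorfman br H F (P (Tv Gm B)) (P (Sp Gm A l))) (Tv Gm Xm) = 0"
    using e2 unfolding q1 q2 pairing_diff1 pairing_add1 P_Tv P_Sp phiTST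
    by (simp add: bilinear_lneg[OF brb] bilinear_lneg[OF Fb] alt3_neg1[OF Hf] field_simps)
  have "pairing (dorfman br H F (Tv Gm B) (Sp Gm A l)) (Tv Gm Xm) = 0"
    using e1 e2' unfolding pairing_diff1 pairing_add1 by simp
  then show ?thesis unfolding phiTST by (simp add: field_simps)
qed

lemma F3:
  assumes I1: "Bn_integrable br H F P"
    and I2: "Bn_integrable br H F (struct_of_components Gm Jp (- Jm) Xp Xm)"
  shows "pairing (dorfman br H F (P (Sp Gm A1 l1)) (Sp Gm A2 l2)
     + dorfman br H F (Sp Gm A1 l1) (P (Sp Gm A2 l2))) (Tv Gm C) = 0"
proof -
  interpret c2: cs Gm Jp "- Jm" Xp Xm using comps_neg[OF comps] by unfold_locales
  have s: "c2.P (Sp Gm A l) = P (Sp Gm A l)" for A l unfolding P_Sp c2.P_Sp ..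
  note e1 = int_cons(2)[OF I1 Sp_range Sp_range, of A1 l1 A2 l2 C]
  note e2 = c2.int_cons(2)[OF I2 c2.Sp_range c2.Sp_range, of A1 l1 A2 l2 C]
  from e1 e2 show ?thesis unfolding s by (simp add: pairing_Tv_neg)
qed

end


lemma span3:
  fixes w1 w2 w3 :: vec3
  assumes ind: "\<And>a b c. a *\<^sub>R w1 + b *\<^sub>R w2 + c *\<^sub>R w3 = 0 \<Longrightarrow> a = 0 \<and> b = 0 \<and> c = 0"
  shows "\<exists>a b c. x = a *\<^sub>R w1 + b *\<^sub>R w2 + c *\<^sub>R w3"
proof -
  define f where "f = (\<lambda>y::vec3. y$1 *\<^sub>R w1 + y$2 *\<^sub>R w2 + y$3 *\<^sub>R w3)"
  have lin: "linear f" unfolding f_def by (rule linearI) (simp_all add: algebra_simps)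
  have "inj f" unfolding linear_injective_0[OF lin]
  proof (intro allI impI)
    fix y assume "f y = 0"
    then have "y$1 = 0 \<and> y$2 = 0 \<and> y$3 = 0" using ind unfolding f_def by blast
    then show "y = 0" by (simp add: vec_eq_iff forall_3)
  qed
  then have "surj f" using linear_inj_imp_surj[OF lin] by blast
  then obtain y where "x = f y" by (metis surjD)
  then show ?thesis unfolding f_def by blast
qed

context met begin

lemma three_zero:
  assumes ind: "\<And>a b c. a *\<^sub>R w1 + b *\<^sub>R w2 + c *\<^sub>R w3 = 0 \<Longrightarrow> a = 0 \<and> b = 0 \<and> c = 0"
    and o: "gm Gm u w1 = 0" "gm Gm u w2 = 0" "gm Gm u w3 = 0"
  shows "u = 0"
proof (rule g_nondeg, rule allI)
  fix y
  obtain a b c where "y = a *\<^sub>R w1 + b *\<^sub>R w2 + c *\<^sub>R w3" using span3[OF ind] by blast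
  then show "gm Gm u y = 0" using o by simp
qed

end

locale ob = met +
  fixes v1 v2 v3 :: vec3 and e :: real
  assumes e: "e = 1 \<or> e = -1"
    and n1: "gm Gm v1 v1 = e" and n2: "gm Gm v2 v2 = 1" and n3: "gm Gm v3 v3 = e"
    and o12: "gm Gm v1 v2 = 0" and o13: "gm Gm v1 v3 = 0" and o23: "gm Gm v2 v3 = 0"
begin

lemma ee: "e * e = 1" using e by auto
lemma ee2: "e * (e * a) = a" using e by auto
lemma o21: "gm Gm v2 v1 = 0" and o31: "gm Gm v3 v1 = 0" and o32: "gm Gm v3 v2 = 0"
  using o12 o13 o23 gsym by metis+

lemmas orth = n1 n2 n3 o12 o13 o23 o21 o31 o32

definition "c1 x = e * gm Gm x v1"
definition "c2 x = gm Gm x v2"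
definition "c3 x = e * gm Gm x v3"

lemma ind: "a *\<^sub>R v1 + b *\<^sub>R v2 + c *\<^sub>R v3 = 0 \<Longrightarrow> a = 0 \<and> b = 0 \<and> c = 0"
proof -
  assume h: "a *\<^sub>R v1 + b *\<^sub>R v2 + c *\<^sub>R v3 = 0"
  have "gm Gm (a *\<^sub>R v1 + b *\<^sub>R v2 + c *\<^sub>R v3) v1 = 0"
    "gm Gm (a *\<^sub>R v1 + b *\<^sub>R v2 + c *\<^sub>R v3) v2 = 0"
    "gm Gm (a *\<^sub>R v1 + b *\<^sub>R v2 + c *\<^sub>R v3) v3 = 0" using h by simp_all
  then have "a * e = 0" "b = 0" "c * e = 0" by (simp_all add: orth)
  then show ?thesis using e by auto
qed

lemma expand: "x = c1 x *\<^sub>R v1 + c2 x *\<^sub>R v2 + c3 x *\<^sub>R v3"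
proof -
  obtain a b c where x: "x = a *\<^sub>R v1 + b *\<^sub>R v2 + c *\<^sub>R v3" using span3[OF ind] by blast
  have "c1 x = a" "c2 x = b" "c3 x = c"
    unfolding x c1_def c2_def c3_def by (simp_all add: orth ee mult.assoc[symmetric])
  then show ?thesis using x by simp
qed

lemma c_lin[simp]:
  "c1 (x + y) = c1 x + c1 y" "c2 (x + y) = c2 x + c2 y" "c3 (x + y) = c3 x + c3 y"
  "c1 (r *\<^sub>R x) = r * c1 x" "c2 (r *\<^sub>R x) = r * c2 x" "c3 (r *\<^sub>R x) = r * c3 x"
  "c1 (- x) = - c1 x" "c2 (- x) = - c2 x" "c3 (- x) = - c3 x"
  "c1 (x - y) = c1 x - c1 y" "c2 (x - y) = c2 x - c2 y" "c3 (x - y) = c3 x - c3 y"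
  "c1 0 = 0" "c2 0 = 0" "c3 0 = 0"
  unfolding c1_def c2_def c3_def by (simp_all add: algebra_simps)

lemma c_basis[simp]:
  "c1 v1 = 1" "c2 v1 = 0" "c3 v1 = 0"
  "c1 v2 = 0" "c2 v2 = 1" "c3 v2 = 0"
  "c1 v3 = 0" "c2 v3 = 0" "c3 v3 = 1"
  unfolding c1_def c2_def c3_def by (simp_all add: orth ee)

lemma g_coord: "gm Gm x y = e * c1 x * c1 y + c2 x * c2 y + e * c3 x * c3 y"
proof -
  have "gm Gm x y = gm Gm x (c1 y *\<^sub>R v1 + c2 y *\<^sub>R v2 + c3 y *\<^sub>R v3)"
    using arg_cong[OF expand[of y], of "gm Gm x"] .
  also have "\<dots> = c1 y * gm Gm x v1 + c2 y * gm Gm x v2 + c3 y * gm Gm x v3" by simp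
  also have "\<dots> = e * c1 x * c1 y + c2 x * c2 y + e * c3 x * c3 y"
    unfolding c1_def c2_def c3_def by (simp add: algebra_simps ee ee2)
  finally show ?thesis .
qed

lemma trace_coord:
  assumes L: "linear L"
  shows "trace (matrix L) = e * gm Gm v1 (L v1) + gm Gm v2 (L v2) + e * gm Gm v3 (L v3)"
proof -
  have ax: "L (axis i 1) $ i = c1 (axis i 1) * (L v1 $ i) + c2 (axis i 1) * (L v2 $ i) + c3 (axis i 1) * (L v3 $ i)" for i
  proof -
    have "L (axis i 1) = L (c1 (axis i 1) *\<^sub>R v1 + c2 (axis i 1) *\<^sub>R v2 + c3 (axis i 1) *\<^sub>R v3)"
      using arg_cong[OF expand[of "axis i (1::real)"], of L] .
    then show ?thesis by (simp add: linear_add[OF L] linear_scale[OF L])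
  qed
  have cax: "c1 (axis i 1) = e * (Gm *v v1) $ i" "c2 (axis i 1) = (Gm *v v2) $ i"
     "c3 (axis i 1) = e * (Gm *v v3) $ i" for i
    unfolding c1_def c2_def c3_def gm_def by (simp_all add: inner_axis')
  have "trace (matrix L) = (\<Sum>i\<in>UNIV. L (axis i 1) $ i)"
    unfolding trace_def matrix_def by simp
  also have "\<dots> = e * ((Gm *v v1) \<bullet> L v1) + (Gm *v v2) \<bullet> L v2 + e * ((Gm *v v3) \<bullet> L v3)"
    unfolding ax cax by (simp add: inner_vec_def sum_3 algebra_simps)
  also have "\<dots> = e * gm Gm v1 (L v1) + gm Gm v2 (L v2) + e * gm Gm v3 (L v3)"
    by (simp add: dotG)
  finally show ?thesis .
qed

end


context cs begin

lemma exists_perp: "\<exists>u. u \<noteq> 0 \<and> gm Gm u Xm = 0"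
proof -
  define n where "n = Gm *v Xm"
  have gu: "gm Gm u Xm = u \<bullet> n" for u unfolding n_def gm_def ..
  show ?thesis
  proof (cases "n$1 = 0")
    case True
    have "axis 1 (1::real) \<noteq> (0::vec3)" by (simp add: axis_eq_0_iff)
    moreover have "gm Gm (axis 1 1) Xm = 0" unfolding gu using True by (simp add: inner_axis')
    ultimately show ?thesis by blast
  next
    case False
    let ?u = "vector [- (n$2), n$1, 0] :: vec3"
    have "?u \<noteq> 0" using False by (metis vector_3(2) zero_index)
    moreover have "gm Gm ?u Xm = 0" unfolding gu by (simp add: inner_vec_def sum_3)
    ultimately show ?thesis by blast
  qed
qed

lemma perp_nonnull: assumes u: "u \<noteq> 0" "gm Gm u Xm = 0" shows "gm Gm u u \<noteq> 0"
proof
  assume q: "gm Gm u u = 0"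
  have JJu: "Jm *v (Jm *v u) = - u" using m.Jsq[OF u(2)] .
  have ind: "a = 0 \<and> b = 0 \<and> c = 0" if h: "a *\<^sub>R u + b *\<^sub>R (Jm *v u) + c *\<^sub>R Xm = 0" for a b c
  proof -
    have "gm Gm (a *\<^sub>R u + b *\<^sub>R (Jm *v u) + c *\<^sub>R Xm) Xm = 0" using h by simp
    then have c: "c = 0" using u(2) by (simp add: m.gJX m.XX)
    then have h1: "a *\<^sub>R u + b *\<^sub>R (Jm *v u) = 0" using h by simp
    then have "Jm *v (a *\<^sub>R u + b *\<^sub>R (Jm *v u)) = 0" by simp
    then have h2: "a *\<^sub>R (Jm *v u) - b *\<^sub>R u = 0"
      by (simp add: matrix_vector_right_distrib matrix_vector_mult_scaleR JJu)
    have "a *\<^sub>R (a *\<^sub>R u + b *\<^sub>R (Jm *v u)) - b *\<^sub>R (a *\<^sub>R (Jm *v u) - b *\<^sub>R u) = 0"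
      using h1 h2 by simp
    then have "(a * a + b * b) *\<^sub>R u = 0" by (simp add: algebra_simps)
    then have "a * a + b * b = 0" using u(1) by simp
    then have "a = 0" "b = 0" by (simp_all add: add_nonneg_eq_0_iff)
    with c show ?thesis by simp
  qed
  have o2: "gm Gm u (Jm *v u) = 0" using m.gJuu[of u] gsym[of u "Jm *v u"] by simp
  have "u = 0" by (rule three_zero[OF ind q o2 u(2)])
  with u(1) show False by simp
qed

lemma exists_v1: "\<exists>v1 e. gm Gm v1 Xm = 0 \<and> gm Gm v1 v1 = e \<and> (e = 1 \<or> e = -1)"
proof -
  obtain u where u: "u \<noteq> 0" "gm Gm u Xm = 0" using exists_perp by blast
  define q where "q = gm Gm u u"
  have q0: "q \<noteq> 0" using perp_nonnull[OF u] unfolding q_def .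
  define v where "v = (1 / sqrt \<bar>q\<bar>) *\<^sub>R u"
  have "gm Gm v Xm = 0" unfolding v_def using u(2) by simp
  moreover have "gm Gm v v = q / \<bar>q\<bar>"
  proof -
    have s: "(1 / sqrt \<bar>q\<bar>) * (1 / sqrt \<bar>q\<bar>) = 1 / \<bar>q\<bar>"
      by (simp add: real_sqrt_mult_self)
    have "gm Gm v v = ((1 / sqrt \<bar>q\<bar>) * (1 / sqrt \<bar>q\<bar>)) * q"
      unfolding v_def q_def by simp
    then show ?thesis unfolding s by simp
  qed
  moreover have "q / \<bar>q\<bar> = 1 \<or> q / \<bar>q\<bar> = -1" using q0 by (cases "q > 0") auto
  ultimately show ?thesis by blast
qed

lemma basis_ob: assumes "gm Gm v1 Xm = 0" "gm Gm v1 v1 = e" "e = 1 \<or> e = -1"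
  shows "ob Gm v1 Xm (Jm *v v1) e"
  unfolding ob_def ob_axioms_def
  using assms metric
  by (auto simp: met_def m.XX m.gJJ m.gJuu m.gJX gsym[of v1 "Jm *v v1"] gsym[of Xm "Jm *v v1"])

end


locale fw = csd +
  fixes v1 :: vec3 and e :: real
  assumes v1X: "gm Gm v1 Xm = 0" and v1v1: "gm Gm v1 v1 = e" and e_pm: "e = 1 \<or> e = -1"
    and I1: "Bn_integrable br H F P"
    and I2: "Bn_integrable br H F (struct_of_components Gm Jp (- Jm) Xp Xm)"
    and unimod: "unimodular3 br"
begin

abbreviation "v3 \<equiv> Jm *v v1"

sublocale ob Gm v1 Xm v3 e using basis_ob[OF v1X v1v1 e_pm] .

definition "r12 = br v1 Xm"
definition "r23 = br Xm v3"
definition "r31 = br v3 v1"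
definition "h = H v1 Xm v3"
definition "f = F v1 v3"
definition "t = gm Gm v3 r12"

lemma brv[simp]: "br v1 v1 = 0" "br Xm Xm = 0" "br v3 v3 = 0"
  "br v1 Xm = r12" "br Xm v3 = r23" "br v3 v1 = r31"
  "br Xm v1 = - r12" "br v3 Xm = - r23" "br v1 v3 = - r31"
  unfolding r12_def r23_def r31_def by (simp_all add: br_xx br_skew[of Xm v1] br_skew[of v3 Xm] br_skew[of v1 v3])

lemma H_rep1: "H x x z = 0" using Hf unfolding alt3_def by blast
lemma H_rep2: "H x y y = 0" using Hf unfolding alt3_def by blast
lemma H_rep3: "H x y x = 0" using alt3_swap23[OF Hf, of x x y] H_rep1[of x y] by simp
lemmas H_rep = H_rep1 H_rep2 H_rep3
lemma Hcyc: "H z x y = H x y z"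
  using alt3_swap12[OF Hf, of x z y] alt3_swap23[OF Hf, of x y z] by simp

lemma Hv[simp]: "H v1 Xm v3 = h" "H Xm v3 v1 = h" "H v3 v1 Xm = h"
  "H Xm v1 v3 = - h" "H v1 v3 Xm = - h" "H v3 Xm v1 = - h"
  unfolding h_def
  using Hcyc[of v1 Xm v3] Hcyc[of Xm v3 v1] alt3_swap12[OF Hf, of v1 Xm v3]
    alt3_swap23[OF Hf, of v1 Xm v3] alt3_swap23[OF Hf, of v3 v1 Xm] by simp_all

lemma Fv[simp]: "F v1 v3 = f" "F v3 v1 = - f"
  unfolding f_def using alt2_skew[OF Ff, of v1 v3] by auto

lemma F1': "gm Gm B Xm = 0 \<Longrightarrow> - gm Gm Xm (br B A) - gm Gm A (br B Xm) - gm Gm B (br A Xm) + H B A Xm + 2 * l * F B Xm = 0"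
  using F1[OF I1 I2] .

lemma v3X: "gm Gm v3 Xm = 0" using orth by simp

lemma s1: "gm Gm v1 r12 = 0" using F1'[OF v1X, of v1 0] by (simp add: H_rep)
lemma s2: "gm Gm Xm r12 = 0" using F1'[OF v1X, of Xm 0] by (simp add: H_rep)
lemma s3: "gm Gm Xm r23 = 0" using F1'[OF v3X, of Xm 0] by (simp add: H_rep)
lemma s4: "gm Gm v3 r23 = 0" using F1'[OF v3X, of v3 0] by (simp add: H_rep)
lemma s5: "gm Gm Xm r31 - gm Gm v3 r12 + gm Gm v1 r23 - h = 0"
  using F1'[OF v1X, of v3 0] by simp
lemma s6: "- gm Gm Xm r31 + gm Gm v1 r23 - gm Gm v3 r12 + h = 0"
  using F1'[OF v3X, of v1 0] by simp
lemma Fz1: "F v1 Xm = 0" using F1'[OF v1X, of Xm 1] s2 by (simp add: H_rep F_xx)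
lemma Fz3: "F v3 Xm = 0" using F1'[OF v3X, of Xm 1] s3 by (simp add: H_rep F_xx)

lemma trace_br: "trace (matrix (br x)) = e * gm Gm v1 (br x v1) + gm Gm Xm (br x Xm) + e * gm Gm v3 (br x v3)"
  by (rule trace_coord) (use brb in \<open>simp add: bilinear_def\<close>)

lemma s7: "gm Gm v3 r31 = 0"
proof -
  have "trace (matrix (br v1)) = 0" using unimod unfolding unimodular3_def by blast
  then show ?thesis unfolding trace_br using s2 e by auto
qed

lemma s8: "gm Gm v1 r31 = 0"
proof -
  have "trace (matrix (br v3)) = 0" using unimod unfolding unimodular3_def by blast
  then show ?thesis unfolding trace_br using s3 e by auto
qed

lemma s9: "gm Gm Xm r31 = h" and s10: "gm Gm v1 r23 = t"
  using s5 s6 unfolding t_def by auto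

lemma r12_eq: "r12 = (e * t) *\<^sub>R v3"
proof -
  have "r12 = c1 r12 *\<^sub>R v1 + c2 r12 *\<^sub>R Xm + c3 r12 *\<^sub>R v3" by (rule expand)
  moreover have "c1 r12 = 0" "c2 r12 = 0" "c3 r12 = e * t"
    unfolding c1_def c2_def c3_def t_def using s1 s2 gsym by auto
  ultimately show ?thesis by simp
qed

lemma r23_eq: "r23 = (e * t) *\<^sub>R v1"
proof -
  have "r23 = c1 r23 *\<^sub>R v1 + c2 r23 *\<^sub>R Xm + c3 r23 *\<^sub>R v3" by (rule expand)
  moreover have "c1 r23 = e * t" "c2 r23 = 0" "c3 r23 = 0"
    unfolding c1_def c2_def c3_def using s3 s4 s10 gsym by auto
  ultimately show ?thesis by simp
qed

lemma r31_eq: "r31 = h *\<^sub>R Xm"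
proof -
  have "r31 = c1 r31 *\<^sub>R v1 + c2 r31 *\<^sub>R Xm + c3 r31 *\<^sub>R v3" by (rule expand)
  moreover have "c1 r31 = 0" "c2 r31 = h" "c3 r31 = 0"
    unfolding c1_def c2_def c3_def using s7 s8 s9 gsym by auto
  ultimately show ?thesis by simp
qed

end


context fw begin

lemma gz: "gm Gm z v1 = e * c1 z" "gm Gm z Xm = c2 z" "gm Gm z v3 = e * c3 z"
  unfolding c1_def c2_def c3_def by (simp_all add: ee2)

lemma ex2: "br x y = br (c1 x *\<^sub>R v1 + c2 x *\<^sub>R Xm + c3 x *\<^sub>R v3) (c1 y *\<^sub>R v1 + c2 y *\<^sub>R Xm + c3 y *\<^sub>R v3)"
  by (simp only: expand[of x, symmetric] expand[of y, symmetric])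

lemma br_exp: "br x y = (c1 x * c2 y - c2 x * c1 y) *\<^sub>R r12 + (c2 x * c3 y - c3 x * c2 y) *\<^sub>R r23
    + (c3 x * c1 y - c1 x * c3 y) *\<^sub>R r31"
  apply (subst ex2)
  apply (simp add: bilinear_ladd[OF brb] bilinear_radd[OF brb] bilinear_lmul[OF brb] bilinear_rmul[OF brb])
  apply (simp add: algebra_simps)
  done

lemma br_coord: "gm Gm z (br x y) = t * (c1 z * (c2 x * c3 y - c3 x * c2 y) + c3 z * (c1 x * c2 y - c2 x * c1 y))
   + h * c2 z * (c3 x * c1 y - c1 x * c3 y)"
  apply (subst br_exp)
  apply (simp only: r12_eq r23_eq r31_eq)
  apply (simp add: gz algebra_simps ee2)
  done

lemma H_coord: "H x y z = h * (c1 x * (c2 y * c3 z - c3 y * c2 z) - c2 x * (c1 y * c3 z - c3 y * c1 z)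
    + c3 x * (c1 y * c2 z - c2 y * c1 z))"
proof -
  have "H x y z = H (c1 x *\<^sub>R v1 + c2 x *\<^sub>R Xm + c3 x *\<^sub>R v3) (c1 y *\<^sub>R v1 + c2 y *\<^sub>R Xm + c3 y *\<^sub>R v3)
     (c1 z *\<^sub>R v1 + c2 z *\<^sub>R Xm + c3 z *\<^sub>R v3)"
    by (simp only: expand[of x, symmetric] expand[of y, symmetric] expand[of z, symmetric])
  also have "\<dots> = h * (c1 x * (c2 y * c3 z - c3 y * c2 z) - c2 x * (c1 y * c3 z - c3 y * c1 z)
    + c3 x * (c1 y * c2 z - c2 y * c1 z))"
    apply (simp only: alt3_lin1[OF Hf] alt3_lin2[OF Hf] alt3_lin3[OF Hf] alt3_sc1[OF Hf]
        alt3_sc2[OF Hf] alt3_sc3[OF Hf])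
    apply (simp only: H_rep Hv)
    apply (simp only: mult_zero_right mult_zero_left add_0_left add_0_right)
    apply (simp add: algebra_simps del: Hv brv Fv)
    done
  finally show ?thesis .
qed

lemma F_coord: "F x y = f * (c1 x * c3 y - c3 x * c1 y)"
proof -
  have Fs: "F Xm v1 = 0" "F Xm v3 = 0" using Fz1 Fz3 alt2_skew[OF Ff, of v1 Xm] alt2_skew[OF Ff, of v3 Xm] by auto
  have "F x y = F (c1 x *\<^sub>R v1 + c2 x *\<^sub>R Xm + c3 x *\<^sub>R v3) (c1 y *\<^sub>R v1 + c2 y *\<^sub>R Xm + c3 y *\<^sub>R v3)"
    by (simp only: expand[of x, symmetric] expand[of y, symmetric])
  also have "\<dots> = f * (c1 x * c3 y - c3 x * c1 y)"
    apply (simp only: bilinear_ladd[OF Fb] bilinear_radd[OF Fb] bilinear_lmul[OF Fb] bilinear_rmul[OF Fb])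
    apply (simp only: F_xx Fz1 Fz3 Fs Fv real_scaleR_def)
    apply (simp only: mult_zero_right mult_zero_left add_0_left add_0_right)
    apply (simp add: algebra_simps del: Hv brv Fv)
    done
  finally show ?thesis .
qed

definition "phiS A1 l1 A2 l2 C = (- gm Gm C (br A1 A2) - gm Gm A2 (br A1 C) + gm Gm A1 (br A2 C) + H A1 A2 C) / 2
   + l2 * F A1 C - l1 * F A2 C"

lemma EQ:
  assumes "gm Gm Xp a = 0"
  shows "phiS (Jp *v a) 0 Xp 0 C + phiS a 0 0 (-1) C = 0"
    and "phiS (Jp *v a) 0 0 1 C + phiS a 0 Xp 0 C = 0"
proof -
  note F3' = F3[OF I1 I2]
  have P1: "P (Sp Gm a 0) = Sp Gm (Jp *v a) 0" unfolding P_Sp using assms by simp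
  have P2: "P (Sp Gm Xp 0) = Sp Gm 0 (-1)" unfolding P_Sp by (simp add: p.JX p.XX)
  have P3: "P (Sp Gm 0 1) = Sp Gm Xp 0" unfolding P_Sp by simp
  show "phiS (Jp *v a) 0 Xp 0 C + phiS a 0 0 (-1) C = 0"
    using F3'[of a 0 Xp 0 C] by (simp only: P1 P2 pairing_add1 phiSST phiS_def)
  show "phiS (Jp *v a) 0 0 1 C + phiS a 0 Xp 0 C = 0"
    using F3'[of a 0 0 1 C] by (simp only: P1 P3 pairing_add1 phiSST phiS_def)
qed

lemma phiS_coord: "phiS A1 l1 A2 l2 C =
  (- (t * (c1 C * (c2 A1 * c3 A2 - c3 A1 * c2 A2) + c3 C * (c1 A1 * c2 A2 - c2 A1 * c1 A2))
      + h * c2 C * (c3 A1 * c1 A2 - c1 A1 * c3 A2))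
   - (t * (c1 A2 * (c2 A1 * c3 C - c3 A1 * c2 C) + c3 A2 * (c1 A1 * c2 C - c2 A1 * c1 C))
      + h * c2 A2 * (c3 A1 * c1 C - c1 A1 * c3 C))
   + (t * (c1 A1 * (c2 A2 * c3 C - c3 A2 * c2 C) + c3 A1 * (c1 A2 * c2 C - c2 A2 * c1 C))
      + h * c2 A1 * (c3 A2 * c1 C - c1 A2 * c3 C))
   + h * (c1 A1 * (c2 A2 * c3 C - c3 A2 * c2 C) - c2 A1 * (c1 A2 * c3 C - c3 A2 * c1 C)
      + c3 A1 * (c1 A2 * c2 C - c2 A2 * c1 C))) / 2
  + l2 * (f * (c1 A1 * c3 C - c3 A1 * c1 C)) - l1 * (f * (c1 A2 * c3 C - c3 A2 * c1 C))"
  by (simp only: phiS_def br_coord H_coord F_coord)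

end


lemma alg_B:
  fixes e t h f p1 p2 p3 b1 b2 b3 :: real
  assumes e: "e = 1 \<or> e = -1" and np: "\<not> (p1 = 0 \<and> p3 = 0)"
    and q1: "t * (p1 * p1 + p3 * p3) = 0" and q2: "b3 * f = h * p1 * p2"
    and q3: "b1 * f = - (h * p2 * p3)"
    and q4: "b2 * h * p3 - b3 * h * p2 = f * p1" and q5: "b1 * h * p2 - b2 * h * p1 = f * p3"
    and k1: "b1 * p3 = b3 * p1" and k2: "e * (b1 * p1 + b3 * p3) + b2 * p2 = 0"
    and k3: "e * (b1 * b1 + b3 * b3) + b2 * b2 = e * (p1 * p1 + p3 * p3)"
  shows "t = 0 \<and> h = 0 \<and> f = 0"
proof -
  define s where "s = p1 * p1 + p3 * p3"
  have s: "s > 0" unfolding s_def using np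
    by (simp add: sum_squares_gt_zero_iff)
  then have s0: "s \<noteq> 0" by simp
  have "t * s = 0" using q1 unfolding s_def .
  then have t: "t = 0" using s0 by simp
  have "f * (b1 * p3 - b3 * p1) = (b1 * f) * p3 - (b3 * f) * p1" by (simp add: algebra_simps)
  also have "\<dots> = - (h * p2) * s" unfolding q2 q3 s_def by (simp add: algebra_simps)
  finally have "f * (b1 * p3 - b3 * p1) = - (h * p2) * s" .
  moreover have "b1 * p3 - b3 * p1 = 0" using k1 by simp
  ultimately have "(h * p2) * s = 0" by simp
  then have hp2: "h * p2 = 0" using s0 by simp
  have w1: "b3 * h * p2 = 0" "b1 * h * p2 = 0" using hp2 by (simp_all add: mult.assoc)
  then have q4': "b2 * h * p3 = f * p1" and q5': "- (b2 * h * p1) = f * p3"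
    using q4 q5 w1 by linarith+
  have "f * s = p1 * (b2 * h * p3) + p3 * (- (b2 * h * p1))"
    unfolding s_def q4' q5' by (simp add: algebra_simps)
  then have "f * s = 0" by (simp add: algebra_simps)
  then have f: "f = 0" using s0 by simp
  have z1: "b2 * h * p3 = 0" and z2: "b2 * h * p1 = 0" using q4' q5' f by simp_all
  have "(b2 * h) * s = (b2 * h * p1) * p1 + (b2 * h * p3) * p3" unfolding s_def by (simp add: algebra_simps)
  then have "(b2 * h) * s = 0" unfolding z1 z2 by simp
  then have b2h: "b2 * h = 0" using s0 by simp
  have h: "h = 0"
  proof (rule ccontr)
    assume h0: "h \<noteq> 0"
    then have b2: "b2 = 0" and p2: "p2 = 0" using b2h hp2 by simp_all
    have e0: "e \<noteq> 0" using e by auto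
    have "e * (b1 * p1 + b3 * p3) = 0" using k2 b2 by simp
    then have k2': "b1 * p1 + b3 * p3 = 0" using e0 by simp
    have k1': "b1 * p3 - b3 * p1 = 0" using k1 by simp
    have "b1 * s = p1 * (b1 * p1 + b3 * p3) + p3 * (b1 * p3 - b3 * p1)" unfolding s_def by (simp add: algebra_simps)
    then have "b1 * s = 0" unfolding k1' k2' by simp
    then have b1: "b1 = 0" using s0 by simp
    have "b3 * s = p3 * (b1 * p1 + b3 * p3) - p1 * (b1 * p3 - b3 * p1)" unfolding s_def by (simp add: algebra_simps)
    then have "b3 * s = 0" unfolding k1' k2' by simp
    then have b3: "b3 = 0" using s0 by simp
    have "e * s = 0" using k3 unfolding b1 b2 b3 s_def by simp
    then show False using e0 s0 by simp
  qed
  show ?thesis using t h f by simp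
qed

lemma alg_A:
  fixes h f p2 b3 :: real
  assumes b3: "b3 * b3 = 1" and p2: "p2 * p2 = 1"
    and q2: "b3 * f = 0" and q4: "b3 * h * p2 = 0"
  shows "h = 0 \<and> f = 0"
proof -
  have "b3 \<noteq> 0" "p2 \<noteq> 0" using b3 p2 by auto
  then show ?thesis using q2 q4 by simp
qed


context fw begin

abbreviation "p1 \<equiv> c1 Xp"
abbreviation "p2 \<equiv> c2 Xp"
abbreviation "p3 \<equiv> c3 Xp"

lemma XpXp: "e * p1 * p1 + p2 * p2 + e * p3 * p3 = 1"
  using p.XX unfolding g_coord .

lemma caseA:
  assumes z: "p1 = 0" "p3 = 0"
  shows "h = 0" "f = 0" "Xp = Xm \<or> Xp = - Xm"
proof -
  define b where "b = Jp *v v1"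
  have p22: "p2 * p2 = 1" using XpXp z by simp
  have Xpe: "Xp = p2 *\<^sub>R Xm" using expand[of Xp] z by simp
  then show "Xp = Xm \<or> Xp = - Xm" using p22
    by (metis minus_mult_minus mult_cancel_right1 mult_minus_left scaleR_minus1_left scaleR_one square_eq_1_iff)
  have hv: "gm Gm Xp v1 = 0" using z by (simp add: gz)
  then have ha: "gm Gm Xp v1 = 0" .
  have "gm Gm b v1 = 0" unfolding b_def by (rule p.gJuu)
  then have b1: "c1 b = 0" using e by (auto simp: gz)
  have "gm Gm b Xp = 0" unfolding b_def using p.gJX by simp
  then have b2: "c2 b = 0" using p22 z unfolding g_coord by (simp add: b1) (metis mult_zero_left zero_neq_one)
  have "gm Gm b b = e" unfolding b_def using p.gJJ[of v1 v1] hv gsym[of v1 Xp] by (simp add: orth)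
  then have b3: "c3 b * c3 b = 1" unfolding g_coord using b1 b2 e by auto
  have E2: "c3 b * f = 0" using EQ(2)[OF ha, of v1] z b1 b2 unfolding b_def[symmetric]
    by (simp add: phiS_coord field_simps)
  have E1: "c3 b * h * p2 = 0" using EQ(1)[OF ha, of v1] z b1 b2 unfolding b_def[symmetric]
    by (simp add: phiS_coord field_simps)
  show "h = 0" "f = 0" using alg_A[OF b3 p22 E2 E1] by auto
qed


lemma caseB:
  assumes np: "\<not> (p1 = 0 \<and> p3 = 0)"
  shows "t = 0" "h = 0" "f = 0"
proof -
  define a where "a = p3 *\<^sub>R v1 - p1 *\<^sub>R v3"
  have ca: "c1 a = p3" "c2 a = 0" "c3 a = - p1" by (simp_all add: a_def)
  have ha: "gm Gm Xp a = 0" unfolding g_coord ca by (simp add: algebra_simps)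
  define b where "b = Jp *v a"
  have "gm Gm b a = 0" unfolding b_def by (rule p.gJuu)
  then have "e * (c1 b * p3 - c3 b * p1) = 0" unfolding g_coord ca by (simp add: algebra_simps)
  then have k1: "c1 b * p3 = c3 b * p1" using e_pm by auto
  have "gm Gm b Xp = 0" unfolding b_def using p.gJX by simp
  then have k2: "e * (c1 b * p1 + c3 b * p3) + c2 b * p2 = 0" unfolding g_coord by (simp add: algebra_simps)
  have "gm Gm b b = gm Gm a a" unfolding b_def using p.gJJ[of a a] ha gsym[of a Xp] by simp
  then have k3: "e * (c1 b * c1 b + c3 b * c3 b) + c2 b * c2 b = e * (p1 * p1 + p3 * p3)"
    unfolding g_coord ca by (simp add: algebra_simps)
  have q1: "t * (p1 * p1 + p3 * p3) = 0" using EQ(2)[OF ha, of Xm] unfolding b_def[symmetric]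
    by (simp add: phiS_coord ca field_simps)
  have q2: "c3 b * f = h * p1 * p2" using EQ(2)[OF ha, of v1] unfolding b_def[symmetric]
    by (simp add: phiS_coord ca field_simps)
  have q3: "c1 b * f = - (h * p2 * p3)" using EQ(2)[OF ha, of v3] unfolding b_def[symmetric]
    by (simp add: phiS_coord ca field_simps)
  have q4: "c2 b * h * p3 - c3 b * h * p2 = f * p1" using EQ(1)[OF ha, of v1] unfolding b_def[symmetric]
    by (simp add: phiS_coord ca field_simps)
  have q5: "c1 b * h * p2 - c2 b * h * p1 = f * p3" using EQ(1)[OF ha, of v3] unfolding b_def[symmetric]
    by (simp add: phiS_coord ca field_simps)
  from alg_B[OF e_pm np q1 q2 q3 q4 q5 k1 k2 k3] show "t = 0" "h = 0" "f = 0" by auto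
qed

end


context fw begin

lemma abelian_if: assumes "t = 0" "h = 0" shows "br x y = 0"
proof (rule g_nondeg, rule allI)
  fix z
  have "gm Gm z (br x y) = 0" unfolding br_coord using assms by simp
  then show "gm Gm (br x y) z = 0" using gsym by metis
qed

lemma fw_concl: "H = (\<lambda>x y z. 0) \<and> F = (\<lambda>x y. 0) \<and>
         ((\<exists>v1 v2 v3 (lam::real).
              gm Gm v1 v2 = 0 \<and> gm Gm v1 v3 = 0 \<and> gm Gm v2 v3 = 0 \<and>
              gm Gm v1 v1 \<in> {1, -1} \<and> gm Gm v3 v3 \<in> {1, -1} \<and> gm Gm v2 v2 = 1 \<and>
              lam \<noteq> 0 \<and>
              br v1 v2 = (gm Gm v3 v3 * lam) *\<^sub>R v3 \<and>
              br v3 v1 = 0 \<and>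
              br v2 v3 = (gm Gm v1 v1 * lam) *\<^sub>R v1 \<and>
              Xm = v2 \<and> (Xp = Xm \<or> Xp = - Xm))
          \<or> (\<forall>x y. br x y = 0))"
proof -
  have hf: "h = 0 \<and> f = 0" using caseA caseB by blast
  have H0: "H = (\<lambda>x y z. 0)" using hf by (intro ext) (simp add: H_coord)
  have F0: "F = (\<lambda>x y. 0)" using hf by (intro ext) (simp add: F_coord)
  show ?thesis
  proof (cases "p1 = 0 \<and> p3 = 0")
    case True
    note A = caseA[OF conjunct1[OF True] conjunct2[OF True]]
    show ?thesis
    proof (cases "t = 0")
      case True
      then show ?thesis using H0 F0 abelian_if hf by blast
    next
      case False
      have "br v1 Xm = (gm Gm v3 v3 * t) *\<^sub>R v3" using r12_eq by (simp add: orth)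
      moreover have "br v3 v1 = 0" using r31_eq hf by simp
      moreover have "br Xm v3 = (gm Gm v1 v1 * t) *\<^sub>R v1" using r23_eq by (simp add: orth)
      moreover have "gm Gm v1 v1 \<in> {1, -1}" "gm Gm v3 v3 \<in> {1, -1}" using orth e by auto
      ultimately have "\<exists>v1 v2 v3 (lam::real).
              gm Gm v1 v2 = 0 \<and> gm Gm v1 v3 = 0 \<and> gm Gm v2 v3 = 0 \<and>
              gm Gm v1 v1 \<in> {1, -1} \<and> gm Gm v3 v3 \<in> {1, -1} \<and> gm Gm v2 v2 = 1 \<and>
              lam \<noteq> 0 \<and>
              br v1 v2 = (gm Gm v3 v3 * lam) *\<^sub>R v3 \<and>
              br v3 v1 = 0 \<and>
              br v2 v3 = (gm Gm v1 v1 * lam) *\<^sub>R v1 \<and>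
              Xm = v2 \<and> (Xp = Xm \<or> Xp = - Xm)"
        using False A(3) orth by blast
      then show ?thesis using H0 F0 by blast
    qed
  next
    case False
    have "t = 0" "h = 0" using caseB[OF False] by auto
    then show ?thesis using H0 F0 abelian_if by blast
  qed
qed

end

lemma forward:
  fixes br :: "real^3 \<Rightarrow> real^3 \<Rightarrow> real^3"
    and Gm Jp Jm :: "real^3^3"
    and Xp Xm :: "real^3"
    and H :: "real^3 \<Rightarrow> real^3 \<Rightarrow> real^3 \<Rightarrow> real"
    and F :: "real^3 \<Rightarrow> real^3 \<Rightarrow> real"
  assumes lie: "lie_algebra3 br"
    and unimod: "unimodular3 br"
    and comps: "components_ok Gm Jp Jm Xp Xm"
    and Hform: "alt3 H"
    and Fform: "alt2 F"
    and K: "Bn_gen_pseudo_Kahler br H F (std_gen_metric Gm) (struct_of_components Gm Jp Jm Xp Xm)"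
  shows "H = (\<lambda>x y z. 0) \<and> F = (\<lambda>x y. 0) \<and>
         ((\<exists>v1 v2 v3 (lam::real).
              gm Gm v1 v2 = 0 \<and> gm Gm v1 v3 = 0 \<and> gm Gm v2 v3 = 0 \<and>
              gm Gm v1 v1 \<in> {1, -1} \<and> gm Gm v3 v3 \<in> {1, -1} \<and> gm Gm v2 v2 = 1 \<and>
              lam \<noteq> 0 \<and>
              br v1 v2 = (gm Gm v3 v3 * lam) *\<^sub>R v3 \<and>
              br v3 v1 = 0 \<and>
              br v2 v3 = (gm Gm v1 v1 * lam) *\<^sub>R v1 \<and>
              Xm = v2 \<and> (Xp = Xm \<or> Xp = - Xm))
          \<or> (\<forall>x y. br x y = 0))"
proof -
  interpret cs Gm Jp Jm Xp Xm using comps by unfold_locales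
  obtain v1 e where v: "gm Gm v1 Xm = 0" "gm Gm v1 v1 = e" "e = 1 \<or> e = -1"
    using exists_v1 by blast
  have I1: "Bn_integrable br H F P" using K unfolding Bn_gen_pseudo_Kahler_def by blast
  have I2: "Bn_integrable br H F (struct_of_components Gm Jp (- Jm) Xp Xm)"
    using K unfolding Bn_gen_pseudo_Kahler_def Ge_P by blast
  interpret fw Gm Jp Jm Xp Xm br H F v1 e
    by unfold_locales (use lie Hform Fform v I1 I2 unimod in auto)
  show ?thesis by (rule fw_concl)
qed



definition S7 :: "real^3^3 \<Rightarrow> vec3 \<Rightarrow> real \<Rightarrow> vec3 \<Rightarrow> sec" where
  "S7 G A l B = (A + B, G *v (A - B), l)"

context met begin

lemma S7_surj: "\<exists>A l B. u = S7 Gm A l B"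
proof (cases u)
  case (fields X xi l)
  let ?A = "(1/2) *\<^sub>R (X + matrix_inv Gm *v xi)" and ?B = "(1/2) *\<^sub>R (X - matrix_inv Gm *v xi)"
  have "u = S7 Gm ?A l ?B"
    unfolding fields S7_def
    by (simp add: matrix_vector_mult_scaleR matrix_vector_right_distrib
      matrix_vector_mult_diff_distrib algebra_simps scaleR_2[symmetric])
  then show ?thesis by blast
qed

lemma S7_add: "S7 Gm A l B + S7 Gm A' l' B' = S7 Gm (A + A') (l + l') (B + B')"
  unfolding S7_def by (simp add: matrix_vector_right_distrib matrix_vector_mult_diff_distrib algebra_simps)
lemma S7_scale: "c *\<^sub>R S7 Gm A l B = S7 Gm (c *\<^sub>R A) (c * l) (c *\<^sub>R B)"
  unfolding S7_def by (simp add: matrix_vector_mult_scaleR algebra_simps)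
lemma S7_neg: "- S7 Gm A l B = S7 Gm (- A) (- l) (- B)"
  unfolding S7_def by (simp add: algebra_simps)
lemma S7_zero: "S7 Gm 0 0 0 = 0"
  unfolding S7_def by (simp add: zero_prod_def)
lemma S7_inj: "S7 Gm A l B = S7 Gm A' l' B' \<longleftrightarrow> A = A' \<and> l = l' \<and> B = B'"
proof
  assume h: "S7 Gm A l B = S7 Gm A' l' B'"
  then have 1: "A + B = A' + B'" and 2: "Gm *v (A - B) = Gm *v (A' - B')" and 3: "l = l'"
    unfolding S7_def by auto
  from 2 have "A - B = A' - B'" by (rule G_inj)
  with 1 have "(A + B) + (A - B) = (A' + B') + (A' - B')" "(A + B) - (A - B) = (A' + B') - (A' - B')" by simp_all
  then have "2 *\<^sub>R A = 2 *\<^sub>R A'" "2 *\<^sub>R B = 2 *\<^sub>R B'" by (simp_all add: algebra_simps scaleR_2)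
  then show "A = A' \<and> l = l' \<and> B = B'" using 3 by simp
qed simp

lemma pairing_S7: "pairing (S7 Gm A l B) (S7 Gm A' l' B') = gm Gm A A' + l * l' - gm Gm B B'"
  unfolding S7_def pairing_def
  by (simp add: dotG inner_add_right inner_diff_right inner_add_left gsym[of A' A] gsym[of B' B]
      gsym[of B A'] gsym[of B' A] field_simps)

lemma Ge_S7: "std_gen_metric Gm (S7 Gm A l B) = S7 Gm A l (- B)"
  unfolding std_gen_metric_def S7_def by simp

lemma pairing_nondeg: assumes "\<forall>z. pairing a z = pairing b z" shows "a = b"
proof -
  obtain X xi l where d: "a - b = (X, xi, l)" by (cases "a - b") auto
  have "pairing (a - b) (xi, X, l) = 0" using assms by (simp add: pairing_diff1)
  then have "(X \<bullet> X + xi \<bullet> xi) / 2 + l * l = 0" unfolding d pairing_def by (simp add: inner_commute)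
  then have sum: "X \<bullet> X + (xi \<bullet> xi + 2 * (l * l)) = 0" by (simp add: field_simps)
  have nn: "X \<bullet> X \<ge> 0" "xi \<bullet> xi \<ge> 0" "2 * (l * l) \<ge> 0" by simp_all
  from sum nn have "X \<bullet> X = 0" "xi \<bullet> xi + 2 * (l * l) = 0"
    by (simp_all add: add_nonneg_eq_0_iff)
  with nn have "X \<bullet> X = 0" "xi \<bullet> xi = 0" "l * l = 0"
    by (simp_all add: add_nonneg_eq_0_iff)
  then have "a - b = 0" unfolding d by (simp add: zero_prod_def)
  then show ?thesis by simp
qed

lemma gen_metric_std: "gen_metric (std_gen_metric Gm)"
proof -
  have lin: "linear (std_gen_metric Gm)"
  proof (rule linearI)
    fix u v :: sec
    obtain A l B A' l' B' where u: "u = S7 Gm A l B" and v: "v = S7 Gm A' l' B'" using S7_surj by meson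
    show "std_gen_metric Gm (u + v) = std_gen_metric Gm u + std_gen_metric Gm v"
      unfolding u v S7_add Ge_S7 by simp
  next
    fix c and u :: sec
    obtain A l B where u: "u = S7 Gm A l B" using S7_surj by meson
    show "std_gen_metric Gm (c *\<^sub>R u) = c *\<^sub>R std_gen_metric Gm u"
      unfolding u S7_scale Ge_S7 by simp
  qed
  have inv: "std_gen_metric Gm (std_gen_metric Gm u) = u" for u
  proof -
    obtain A l B where u: "u = S7 Gm A l B" using S7_surj by meson
    show ?thesis unfolding u Ge_S7 by simp
  qed
  have sym: "pairing (std_gen_metric Gm u) v = pairing u (std_gen_metric Gm v)" for u v
  proof -
    obtain A l B A' l' B' where u: "u = S7 Gm A l B" and v: "v = S7 Gm A' l' B'" using S7_surj by meson
    show ?thesis unfolding u v Ge_S7 pairing_S7 by simp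
  qed
  show ?thesis unfolding gen_metric_def using lin inv sym by blast
qed

end

context cs begin

lemma P_S7: "P (S7 Gm A l B) = S7 Gm (Jp *v A + l *\<^sub>R Xp) (- gm Gm Xp A) (Jm *v B)"
  unfolding struct_of_components_def S7_def Let_def
  by (simp add: matrix_vector_mult_scaleR matrix_vector_right_distrib matrix_vector_mult_diff_distrib
      algebra_simps scaleR_2[symmetric])

lemma P_lin: "linear P"
proof (rule linearI)
  fix u v :: sec
  obtain A l B A' l' B' where u: "u = S7 Gm A l B" and v: "v = S7 Gm A' l' B'" using S7_surj by meson
  show "P (u + v) = P u + P v"
    unfolding u v S7_add P_S7 by (simp add: matrix_vector_right_distrib algebra_simps)
next
  fix c and u :: sec
  obtain A l B where u: "u = S7 Gm A l B" using S7_surj by meson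
  show "P (c *\<^sub>R u) = c *\<^sub>R P u"
    unfolding u S7_scale P_S7 by (simp add: matrix_vector_mult_scaleR algebra_simps)
qed

lemma P_skew: "pairing (P u) v = - pairing u (P v)"
proof -
  obtain A l B A' l' B' where u: "u = S7 Gm A l B" and v: "v = S7 Gm A' l' B'" using S7_surj by meson
  show ?thesis unfolding u v P_S7 pairing_S7
    by (simp add: p.skew2 m.skew2 gsym[of Xp] algebra_simps)
qed

lemma P_sq: "P (P (S7 Gm A l B)) = S7 Gm (- A) (- l) (- B + gm Gm B Xm *\<^sub>R Xm)"
  unfolding P_S7 by (simp add: matrix_vector_right_distrib matrix_vector_mult_scaleR p.JJ p.JX m.JJ
      p.skew2 p.XX gsym[of A Xp])

lemma P_cube: "P (P (P u)) = - P u"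
proof -
  obtain A l B where u: "u = S7 Gm A l B" using S7_surj by meson
  have "P (P (P u)) = P (S7 Gm (- A) (- l) (- B + gm Gm B Xm *\<^sub>R Xm))" unfolding u P_sq ..
  also have "\<dots> = - P u" unfolding u P_S7 S7_neg
    by (simp add: matrix_vector_right_distrib matrix_vector_mult_scaleR m.JX matrix_vector_mult_diff_distrib)
  finally show ?thesis .
qed

lemma P_ker: "{u. P u = 0} = span {S7 Gm 0 0 Xm}"
proof -
  have "P u = 0 \<longleftrightarrow> (\<exists>c. u = c *\<^sub>R S7 Gm 0 0 Xm)" for u
  proof
    assume h: "P u = 0"
    obtain A l B where u: "u = S7 Gm A l B" using S7_surj by meson
    from h have "S7 Gm (Jp *v A + l *\<^sub>R Xp) (- gm Gm Xp A) (Jm *v B) = S7 Gm 0 0 0"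
      unfolding u P_S7 S7_zero .
    then have e1: "Jp *v A + l *\<^sub>R Xp = 0" and e2: "gm Gm Xp A = 0" and e3: "Jm *v B = 0"
      unfolding S7_inj by auto
    have "gm Gm (Jp *v A + l *\<^sub>R Xp) Xp = 0" using e1 by simp
    then have l: "l = 0" by (simp add: p.gJX p.XX)
    then have "Jp *v A = 0" using e1 by simp
    then have A: "A = 0" using p.JJ[of A] e2 gsym[of A Xp] by simp
    have B: "B = gm Gm B Xm *\<^sub>R Xm" using m.JJ[of B] e3 by simp
    have "u = gm Gm B Xm *\<^sub>R S7 Gm 0 0 Xm" unfolding u S7_scale A l using B by simp
    then show "\<exists>c. u = c *\<^sub>R S7 Gm 0 0 Xm" by blast
  next
    assume "\<exists>c. u = c *\<^sub>R S7 Gm 0 0 Xm"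
    then obtain c where "u = c *\<^sub>R S7 Gm 0 0 Xm" by blast
    then show "P u = 0" by (simp add: S7_scale P_S7 m.JX S7_zero matrix_vector_mult_scaleR)
  qed
  then show ?thesis unfolding span_singleton by auto
qed

lemma S7_Xm_nz: "S7 Gm 0 0 Xm \<noteq> 0"
proof
  assume "S7 Gm 0 0 Xm = 0"
  then have "S7 Gm 0 0 Xm = S7 Gm 0 0 0" by (simp add: S7_zero)
  then have "Xm = 0" unfolding S7_inj by simp
  then show False using m.XX by simp
qed

lemma Bn_gacs_P: "Bn_gacs P"
proof -
  have d: "dim {u. P u = 0} = 1" unfolding P_ker using S7_Xm_nz by simp
  have nd: "pairing u u \<noteq> 0" if "P u = 0" "u \<noteq> 0" for u
  proof -
    have "u \<in> span {S7 Gm 0 0 Xm}" using that P_ker by blast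
    then obtain c where u: "u = c *\<^sub>R S7 Gm 0 0 Xm" unfolding span_singleton by auto
    with that have "c \<noteq> 0" by auto
    then show ?thesis unfolding u S7_scale pairing_S7 by (simp add: m.XX)
  qed
  show ?thesis unfolding Bn_gacs_def using P_lin P_skew P_cube d nd by blast
qed

lemma Ge_comm: "std_gen_metric Gm \<circ> P = P \<circ> std_gen_metric Gm"
proof
  fix u
  obtain A l B where u: "u = S7 Gm A l B" using S7_surj by meson
  show "(std_gen_metric Gm \<circ> P) u = (P \<circ> std_gen_metric Gm) u"
    unfolding u comp_def P_S7 Ge_S7 by simp
qed

end


context met begin
lemma phi_S7:
  assumes br: "bilinear br" and H: "alt3 H" and F: "alt2 F"
  shows "pairing (dorfman br H F (S7 Gm A1 l1 B1) (S7 Gm A2 l2 B2)) (S7 Gm A3 l3 B3) =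
    (gm Gm (A3 - B3) (br (A1 + B1) (A2 + B2)) - gm Gm (A2 - B2) (br (A1 + B1) (A3 + B3))
     + gm Gm (A1 - B1) (br (A2 + B2) (A3 + B3)) + H (A1 + B1) (A2 + B2) (A3 + B3)) / 2
    + l2 * F (A1 + B1) (A3 + B3) - l1 * F (A2 + B2) (A3 + B3) - l3 * F (A1 + B1) (A2 + B2)"
  unfolding S7_def phi_gen[OF br H F] by (simp add: dotG)
end

lemma dorfman_abelian:
  assumes "\<forall>x y. br x y = 0"
  shows "dorfman br (\<lambda>x y z. 0) (\<lambda>x y. 0) u v = 0"
proof -
  have br0: "br = (\<lambda>x y. 0)" using assms by (intro ext) simp
  have z: "(\<chi> k::3. (0::real)) = 0" by (simp add: zero_vec_def)
  show ?thesis unfolding br0 by (cases u, cases v) (simp add: dorfman_def zero_prod_def z)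
qed

context cs begin

lemma integrable_abelian:
  assumes "\<forall>x y. br x y = 0"
  shows "Bn_integrable br (\<lambda>x y z. 0) (\<lambda>x y. 0) P"
  unfolding Bn_integrable_def Let_def dorfman_abelian[OF assms]
  using linear_0[OF P_lin] by auto

lemma range_of_pairing: assumes "pairing w (S7 Gm 0 0 Xm) = 0" shows "w \<in> range P"
proof -
  obtain A l B where w: "w = S7 Gm A l B" using S7_surj by meson
  have "gm Gm B Xm = 0" using assms unfolding w pairing_S7 by simp
  then have "P (P w) = - w" unfolding w P_sq S7_neg by simp
  then have "w = P (- P w)" using linear_neg[OF P_lin] by simp
  then show ?thesis by blast
qed

end


locale rv = cs +
  fixes br :: "vec3 \<Rightarrow> vec3 \<Rightarrow> vec3" and v1 v3 :: vec3 and lam :: real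
  assumes lie: "lie_algebra3 br"
    and o12': "gm Gm v1 Xm = 0" and o13': "gm Gm v1 v3 = 0" and o23': "gm Gm Xm v3 = 0"
    and n1': "gm Gm v1 v1 \<in> {1, -1}" and n3': "gm Gm v3 v3 \<in> {1, -1}"
    and b12: "br v1 Xm = (gm Gm v3 v3 * lam) *\<^sub>R v3" and b31: "br v3 v1 = 0"
    and b23: "br Xm v3 = (gm Gm v1 v1 * lam) *\<^sub>R v1"
    and Xpm: "Xp = Xm \<or> Xp = - Xm"
begin

definition "e1 = gm Gm v1 v1"
definition "e3 = gm Gm v3 v3"
definition "mm = e3 * gm Gm (Jm *v v1) v3"

lemma e1_pm: "e1 = 1 \<or> e1 = -1" and e3_pm: "e3 = 1 \<or> e3 = -1"
  using n1' n3' unfolding e1_def e3_def by auto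

lemma Jmv1: "Jm *v v1 = mm *\<^sub>R v3"
proof -
  have ind: "a = 0 \<and> b = 0 \<and> c = 0" if h: "a *\<^sub>R v1 + b *\<^sub>R Xm + c *\<^sub>R v3 = 0" for a b c
  proof -
    have "gm Gm (a *\<^sub>R v1 + b *\<^sub>R Xm + c *\<^sub>R v3) v1 = 0"
      "gm Gm (a *\<^sub>R v1 + b *\<^sub>R Xm + c *\<^sub>R v3) Xm = 0"
      "gm Gm (a *\<^sub>R v1 + b *\<^sub>R Xm + c *\<^sub>R v3) v3 = 0" using h by simp_all
    then have "a * e1 = 0" "b = 0" "c * e3 = 0"
      using o12' o13' o23' m.XX gsym[of Xm v1] gsym[of v3 v1] gsym[of v3 Xm]
      unfolding e1_def e3_def by simp_all
    then show ?thesis using e1_pm e3_pm by auto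
  qed
  let ?w = "Jm *v v1 - mm *\<^sub>R v3"
  have "?w = 0"
  proof (rule three_zero[OF ind])
    show "gm Gm ?w v1 = 0" using m.gJuu[of v1] o13' gsym[of v3 v1] by simp
    show "gm Gm ?w Xm = 0" using m.gJX[of v1] o23' gsym[of v3 Xm] by simp
    show "gm Gm ?w v3 = 0" unfolding mm_def using e3_pm unfolding e3_def by auto
  qed
  then show ?thesis by simp
qed

lemma e13: "e1 = e3" and mm2: "mm * mm = 1"
proof -
  have "gm Gm (Jm *v v1) (Jm *v v1) = e1" using m.gJJ[of v1 v1] o12' unfolding e1_def by simp
  then have "mm * mm * e3 = e1" unfolding Jmv1 e3_def by simp
  then have h: "(mm * mm) * e3 = e1" by simp
  have sq: "mm * mm \<ge> 0" by simp
  show "e1 = e3" using e1_pm e3_pm h sq by (elim disjE) simp_all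
  show "mm * mm = 1" using e1_pm e3_pm h sq by (elim disjE) simp_all

qed


sublocale ob Gm v1 Xm v3 e1
  using e1_pm m.XX o12' o13' o23' e13 unfolding e1_def e3_def
  by unfold_locales auto

lemma mm2': "mm * (mm * a) = a" using mm2 by (metis mult.assoc mult_1)

lemma Jmv3: "Jm *v v3 = - mm *\<^sub>R v1"
proof -
  have "Jm *v (Jm *v v1) = - v1" using m.JJ[of v1] o12' by simp
  then have "mm *\<^sub>R (Jm *v v3) = - v1" unfolding Jmv1 by (simp add: matrix_vector_mult_scaleR)
  then have "mm *\<^sub>R (mm *\<^sub>R (Jm *v v3)) = - (mm *\<^sub>R v1)" by simp
  then show ?thesis by (simp add: mm2)
qed

lemma cJm: "c1 (Jm *v x) = - mm * c3 x" "c2 (Jm *v x) = 0" "c3 (Jm *v x) = mm * c1 x"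
proof -
  have "Jm *v x = Jm *v (c1 x *\<^sub>R v1 + c2 x *\<^sub>R Xm + c3 x *\<^sub>R v3)"
    using arg_cong[OF expand[of x], of "\<lambda>y. Jm *v y"] .
  also have "\<dots> = (c1 x * mm) *\<^sub>R v3 - (c3 x * mm) *\<^sub>R v1"
    by (simp add: matrix_vector_right_distrib matrix_vector_mult_scaleR Jmv1 Jmv3 m.JX)
  finally have J: "Jm *v x = (c1 x * mm) *\<^sub>R v3 - (c3 x * mm) *\<^sub>R v1" .
  show "c1 (Jm *v x) = - mm * c3 x" "c2 (Jm *v x) = 0" "c3 (Jm *v x) = mm * c1 x"
    unfolding J by simp_all
qed

definition "sg = c2 Xp"
lemma sg_cases: "(Xp = Xm \<and> sg = 1) \<or> (Xp = - Xm \<and> sg = -1)"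
proof (cases "Xp = Xm")
  case True
  then have "sg = 1" unfolding sg_def by simp
  then show ?thesis using True by simp
next
  case False
  then have X: "Xp = - Xm" using Xpm by blast
  then have "sg = -1" unfolding sg_def by simp
  then show ?thesis using X by simp
qed
lemma sg2: "sg * sg = 1" using sg_cases by auto
lemma cXp: "c1 Xp = 0" "c2 Xp = sg" "c3 Xp = 0"
  using Xpm unfolding sg_def by auto
lemma JpXm: "Jp *v Xm = 0"
  using p.JX Xpm by (auto simp: matrix_vector_mult_scaleR)

definition "qq = c3 (Jp *v v1)"

lemma Jpv1: "Jp *v v1 = qq *\<^sub>R v3"
proof -
  have a: "c1 (Jp *v v1) = 0" unfolding c1_def using p.gJuu[of v1] by simp
  have b: "c2 (Jp *v v1) = 0" unfolding c2_def using p.gJX[of v1] Xpm by auto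
  have "Jp *v v1 = c1 (Jp *v v1) *\<^sub>R v1 + c2 (Jp *v v1) *\<^sub>R Xm + c3 (Jp *v v1) *\<^sub>R v3" by (rule expand)
  then show ?thesis unfolding a b qq_def by simp
qed

lemma v1Xp: "gm Gm v1 Xp = 0" using o12' Xpm by auto

lemma qq2: "qq * qq = 1"
proof -
  have "gm Gm (Jp *v v1) (Jp *v v1) = e1" using p.gJJ[of v1 v1] v1Xp unfolding e1_def by simp
  then have "qq * qq * e1 = e1" unfolding Jpv1 using n3 by (simp add: e13)
  then show ?thesis using e1_pm by auto
qed
lemma qq2': "qq * (qq * a) = a" using qq2 by (metis mult.assoc mult_1)

lemma Jpv3: "Jp *v v3 = - qq *\<^sub>R v1"
proof -
  have "Jp *v (Jp *v v1) = - v1" using p.JJ[of v1] v1Xp by simp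
  then have "qq *\<^sub>R (Jp *v v3) = - v1" unfolding Jpv1 by (simp add: matrix_vector_mult_scaleR)
  then have "qq *\<^sub>R (qq *\<^sub>R (Jp *v v3)) = - (qq *\<^sub>R v1)" by simp
  then show ?thesis by (simp add: qq2)
qed

lemma cJp: "c1 (Jp *v x) = - qq * c3 x" "c2 (Jp *v x) = 0" "c3 (Jp *v x) = qq * c1 x"
proof -
  have "Jp *v x = Jp *v (c1 x *\<^sub>R v1 + c2 x *\<^sub>R Xm + c3 x *\<^sub>R v3)"
    using arg_cong[OF expand[of x], of "\<lambda>y. Jp *v y"] .
  also have "\<dots> = (c1 x * qq) *\<^sub>R v3 - (c3 x * qq) *\<^sub>R v1"
    by (simp add: matrix_vector_right_distrib matrix_vector_mult_scaleR Jpv1 Jpv3 JpXm)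
  finally have J: "Jp *v x = (c1 x * qq) *\<^sub>R v3 - (c3 x * qq) *\<^sub>R v1" .
  show "c1 (Jp *v x) = - qq * c3 x" "c2 (Jp *v x) = 0" "c3 (Jp *v x) = qq * c1 x"
    unfolding J by simp_all
qed

lemma gXp: "gm Gm Xp x = sg * c2 x"
  using sg_cases unfolding c2_def by (auto simp: gsym[of Xm x])

lemma brb: "bilinear br" and br_xx: "br x x = 0" using lie unfolding lie_algebra3_def by auto
lemma br_skew: "br y x = - br x y" using bil_skew[OF brb] br_xx by blast

lemma rbr_coord: "gm Gm z (br x y) = lam * (c1 z * (c2 x * c3 y - c3 x * c2 y) + c3 z * (c1 x * c2 y - c2 x * c1 y))"
proof -
  have ex2: "br x y = br (c1 x *\<^sub>R v1 + c2 x *\<^sub>R Xm + c3 x *\<^sub>R v3) (c1 y *\<^sub>R v1 + c2 y *\<^sub>R Xm + c3 y *\<^sub>R v3)"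
    by (simp only: expand[of x, symmetric] expand[of y, symmetric])
  have bv: "br v1 v1 = 0" "br Xm Xm = 0" "br v3 v3 = 0"
    "br v1 Xm = (e1 * lam) *\<^sub>R v3" "br Xm v3 = (e1 * lam) *\<^sub>R v1" "br v3 v1 = 0"
    "br Xm v1 = - ((e1 * lam) *\<^sub>R v3)" "br v3 Xm = - ((e1 * lam) *\<^sub>R v1)" "br v1 v3 = 0"
    using br_xx b12 b23 b31 br_skew[of Xm v1] br_skew[of v3 Xm] br_skew[of v1 v3] e13
    unfolding e1_def e3_def by simp_all
  have gz: "gm Gm z v1 = e1 * c1 z" "gm Gm z Xm = c2 z" "gm Gm z v3 = e1 * c3 z"
    unfolding c1_def c2_def c3_def by (simp_all add: ee2)
  show ?thesis
    apply (subst ex2)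
    apply (simp only: bilinear_ladd[OF brb] bilinear_radd[OF brb] bilinear_lmul[OF brb] bilinear_rmul[OF brb] bv)
    apply (simp add: gz algebra_simps ee2)
    done
qed

end


context rv begin

lemma Hz: "alt3 (\<lambda>x y z. 0::real)" unfolding alt3_def by (simp add: linear_zero)
lemma Fz: "alt2 (\<lambda>x y. 0::real)" unfolding alt2_def bilinear_def by (simp add: linear_zero)

lemma phi0: "pairing (dorfman br (\<lambda>x y z. 0) (\<lambda>x y. 0) (S7 Gm A1 l1 B1) (S7 Gm A2 l2 B2)) (S7 Gm A3 l3 B3) =
    (gm Gm (A3 - B3) (br (A1 + B1) (A2 + B2)) - gm Gm (A2 - B2) (br (A1 + B1) (A3 + B3))
     + gm Gm (A1 - B1) (br (A2 + B2) (A3 + B3))) / 2"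
  using phi_S7[OF brb Hz Fz] by simp

lemma partA:
  "pairing (dorfman br (\<lambda>x y z. 0) (\<lambda>x y. 0) (P (S7 Gm A1 l1 B1)) (P (S7 Gm A2 l2 B2))
    - dorfman br (\<lambda>x y z. 0) (\<lambda>x y. 0) (P (P (S7 Gm A1 l1 B1))) (P (P (S7 Gm A2 l2 B2)))) (S7 Gm 0 0 Xm) = 0"
  unfolding pairing_diff1 P_sq P_S7 phi0
  apply (simp only: gm_diff1 gm_add1 rbr_coord)
  apply (simp add: cJp cJm cXp gXp algebra_simps mm2' qq2')
  done


lemma sg2': "sg * (sg * a) = a" using sg2 by (metis mult.assoc mult_1)

lemma partB:
  "pairing (dorfman br (\<lambda>x y z. 0) (\<lambda>x y. 0) (P (P (S7 Gm A1 l1 B1))) (P (S7 Gm A2 l2 B2))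
     + dorfman br (\<lambda>x y z. 0) (\<lambda>x y. 0) (P (S7 Gm A1 l1 B1)) (P (P (S7 Gm A2 l2 B2)))) (S7 Gm A3 l3 B3)
   + pairing (dorfman br (\<lambda>x y z. 0) (\<lambda>x y. 0) (P (S7 Gm A1 l1 B1)) (P (S7 Gm A2 l2 B2))
    - dorfman br (\<lambda>x y z. 0) (\<lambda>x y. 0) (P (P (S7 Gm A1 l1 B1))) (P (P (S7 Gm A2 l2 B2)))) (P (S7 Gm A3 l3 B3)) = 0"
  unfolding pairing_diff1 pairing_add1 P_sq P_S7 phi0
  apply (simp only: gm_diff1 gm_add1 rbr_coord)
  apply (simp add: cJp cJm cXp gXp field_simps mm2' qq2' sg2')
  done


lemma integrable_rv: "Bn_integrable br (\<lambda>x y z. 0) (\<lambda>x y. 0) P"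
  unfolding Bn_integrable_def Let_def
proof (intro allI impI)
  fix x y assume xy: "x \<in> range P \<and> y \<in> range P"
  then obtain u u' where x: "x = P u" and y: "y = P u'" by blast
  obtain A1 l1 B1 where u: "u = S7 Gm A1 l1 B1" using S7_surj by meson
  obtain A2 l2 B2 where u': "u' = S7 Gm A2 l2 B2" using S7_surj by meson
  let ?d = "dorfman br (\<lambda>x y z. 0) (\<lambda>x y. 0)"
  let ?w = "?d x y - ?d (P x) (P y)"
  have "pairing ?w (S7 Gm 0 0 Xm) = 0" unfolding x y u u' by (rule partA)
  then have w: "?w \<in> range P" by (rule range_of_pairing)
  have "\<forall>z. pairing (P ?w) z = pairing (?d (P x) y + ?d x (P y)) z"
  proof
    fix z
    obtain A3 l3 B3 where z: "z = S7 Gm A3 l3 B3" using S7_surj by meson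
    have "pairing (?d (P x) y + ?d x (P y)) z + pairing ?w (P z) = 0"
      unfolding x y u u' z by (rule partB)
    then show "pairing (P ?w) z = pairing (?d (P x) y + ?d x (P y)) z"
      unfolding P_skew[of ?w z] by simp
  qed
  then have "P ?w = ?d (P x) y + ?d x (P y)" by (rule pairing_nondeg)
  with w show "?w \<in> range P \<and> P ?w = ?d (P x) y + ?d x (P y)" by blast
qed

end

lemma reverse_i:
  assumes comps: "components_ok Gm Jp Jm Xp Xm" and lie: "lie_algebra3 br"
    and o: "gm Gm v1 v2 = 0" "gm Gm v1 v3 = 0" "gm Gm v2 v3 = 0"
    "gm Gm v1 v1 \<in> {1, -1}" "gm Gm v3 v3 \<in> {1, -1}"
    and b: "br v1 v2 = (gm Gm v3 v3 * lam) *\<^sub>R v3" "br v3 v1 = 0"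
    "br v2 v3 = (gm Gm v1 v1 * lam) *\<^sub>R v1"
    and X: "Xm = v2" "Xp = Xm \<or> Xp = - Xm"
  shows "Bn_integrable br (\<lambda>x y z. 0) (\<lambda>x y. 0) (struct_of_components Gm Jp Jm Xp Xm)"
    and "Bn_integrable br (\<lambda>x y z. 0) (\<lambda>x y. 0) (struct_of_components Gm Jp (- Jm) Xp Xm)"
proof -
  interpret r1: rv Gm Jp Jm Xp Xm br v1 v3 lam
    using comps lie o b X by unfold_locales auto
  interpret r2: rv Gm Jp "- Jm" Xp Xm br v1 v3 lam
    using comps_neg[OF comps] lie o b X by unfold_locales auto
  show "Bn_integrable br (\<lambda>x y z. 0) (\<lambda>x y. 0) (struct_of_components Gm Jp Jm Xp Xm)"
    by (rule r1.integrable_rv)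
  show "Bn_integrable br (\<lambda>x y z. 0) (\<lambda>x y. 0) (struct_of_components Gm Jp (- Jm) Xp Xm)"
    by (rule r2.integrable_rv)
qed

lemma reverse:
  assumes comps: "components_ok Gm Jp Jm Xp Xm" and lie: "lie_algebra3 br"
    and c: "(\<exists>v1 v2 v3 (lam::real).
              gm Gm v1 v2 = 0 \<and> gm Gm v1 v3 = 0 \<and> gm Gm v2 v3 = 0 \<and>
              gm Gm v1 v1 \<in> {1, -1} \<and> gm Gm v3 v3 \<in> {1, -1} \<and> gm Gm v2 v2 = 1 \<and>
              lam \<noteq> 0 \<and>
              br v1 v2 = (gm Gm v3 v3 * lam) *\<^sub>R v3 \<and>
              br v3 v1 = 0 \<and>
              br v2 v3 = (gm Gm v1 v1 * lam) *\<^sub>R v1 \<and>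
              Xm = v2 \<and> (Xp = Xm \<or> Xp = - Xm))
          \<or> (\<forall>x y. br x y = 0)"
  shows "Bn_gen_pseudo_Kahler br (\<lambda>x y z. 0) (\<lambda>x y. 0) (std_gen_metric Gm)
            (struct_of_components Gm Jp Jm Xp Xm)"
proof -
  interpret cs Gm Jp Jm Xp Xm using comps by unfold_locales
  interpret c2: cs Gm Jp "- Jm" Xp Xm using comps_neg[OF comps] by unfold_locales
  have I: "Bn_integrable br (\<lambda>x y z. 0) (\<lambda>x y. 0) P \<and>
    Bn_integrable br (\<lambda>x y z. 0) (\<lambda>x y. 0) (struct_of_components Gm Jp (- Jm) Xp Xm)"
    using c
  proof
    assume "\<exists>v1 v2 v3 (lam::real).
              gm Gm v1 v2 = 0 \<and> gm Gm v1 v3 = 0 \<and> gm Gm v2 v3 = 0 \<and>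
              gm Gm v1 v1 \<in> {1, -1} \<and> gm Gm v3 v3 \<in> {1, -1} \<and> gm Gm v2 v2 = 1 \<and>
              lam \<noteq> 0 \<and>
              br v1 v2 = (gm Gm v3 v3 * lam) *\<^sub>R v3 \<and>
              br v3 v1 = 0 \<and>
              br v2 v3 = (gm Gm v1 v1 * lam) *\<^sub>R v1 \<and>
              Xm = v2 \<and> (Xp = Xm \<or> Xp = - Xm)"
    then obtain v1 v2 v3 lam where h:
      "gm Gm v1 v2 = 0" "gm Gm v1 v3 = 0" "gm Gm v2 v3 = 0"
      "gm Gm v1 v1 \<in> {1, -1}" "gm Gm v3 v3 \<in> {1, -1}"
      "br v1 v2 = (gm Gm v3 v3 * lam) *\<^sub>R v3" "br v3 v1 = 0"
      "br v2 v3 = (gm Gm v1 v1 * lam) *\<^sub>R v1" "Xm = v2" "Xp = Xm \<or> Xp = - Xm"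
      by blast
    show ?thesis using reverse_i[OF comps lie h] by blast
  next
    assume "\<forall>x y. br x y = 0"
    then show ?thesis using integrable_abelian c2.integrable_abelian by blast
  qed
  have I2: "Bn_integrable br (\<lambda>x y z. 0) (\<lambda>x y. 0) (std_gen_metric Gm \<circ> P)"
    unfolding Ge_P using I by blast
  show ?thesis unfolding Bn_gen_pseudo_Kahler_def
    using gen_metric_std Bn_gacs_P Ge_comm I I2 by blast
qed



theorem proposition7p2:
  fixes br :: "real^3 \<Rightarrow> real^3 \<Rightarrow> real^3"
    and Gm Jp Jm :: "real^3^3"
    and Xp Xm :: "real^3"
    and H :: "real^3 \<Rightarrow> real^3 \<Rightarrow> real^3 \<Rightarrow> real"
    and F :: "real^3 \<Rightarrow> real^3 \<Rightarrow> real"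
  assumes lie: "lie_algebra3 br"
    and unimod: "unimodular3 br"
    and comps: "components_ok Gm Jp Jm Xp Xm"
    and Hform: "alt3 H"
    and Fform: "alt2 F"
    and Fclosed: "closed2 br F"
    and Ldiag: "diagonalizable3 (canonical_L br Gm)"
  shows "Bn_gen_pseudo_Kahler br H F (std_gen_metric Gm)
            (struct_of_components Gm Jp Jm Xp Xm)
         \<longleftrightarrow>
         H = (\<lambda>x y z. 0) \<and> F = (\<lambda>x y. 0) \<and>
         ((\<exists>v1 v2 v3 (lam::real).
              gm Gm v1 v2 = 0 \<and> gm Gm v1 v3 = 0 \<and> gm Gm v2 v3 = 0 \<and>
              gm Gm v1 v1 \<in> {1, -1} \<and> gm Gm v3 v3 \<in> {1, -1} \<and> gm Gm v2 v2 = 1 \<and>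
              lam \<noteq> 0 \<and>
              br v1 v2 = (gm Gm v3 v3 * lam) *\<^sub>R v3 \<and>
              br v3 v1 = 0 \<and>
              br v2 v3 = (gm Gm v1 v1 * lam) *\<^sub>R v1 \<and>
              Xm = v2 \<and> (Xp = Xm \<or> Xp = - Xm))
          \<or> (\<forall>x y. br x y = 0))"
proof
  assume K: "Bn_gen_pseudo_Kahler br H F (std_gen_metric Gm) (struct_of_components Gm Jp Jm Xp Xm)"
  show "H = (\<lambda>x y z. 0) \<and> F = (\<lambda>x y. 0) \<and>
         ((\<exists>v1 v2 v3 (lam::real).
              gm Gm v1 v2 = 0 \<and> gm Gm v1 v3 = 0 \<and> gm Gm v2 v3 = 0 \<and>
              gm Gm v1 v1 \<in> {1, -1} \<and> gm Gm v3 v3 \<in> {1, -1} \<and> gm Gm v2 v2 = 1 \<and>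
              lam \<noteq> 0 \<and>
              br v1 v2 = (gm Gm v3 v3 * lam) *\<^sub>R v3 \<and>
              br v3 v1 = 0 \<and>
              br v2 v3 = (gm Gm v1 v1 * lam) *\<^sub>R v1 \<and>
              Xm = v2 \<and> (Xp = Xm \<or> Xp = - Xm))
          \<or> (\<forall>x y. br x y = 0))"
    by (rule forward[OF lie unimod comps Hform Fform K])
next
  assume R: "H = (\<lambda>x y z. 0) \<and> F = (\<lambda>x y. 0) \<and>
         ((\<exists>v1 v2 v3 (lam::real).
              gm Gm v1 v2 = 0 \<and> gm Gm v1 v3 = 0 \<and> gm Gm v2 v3 = 0 \<and>
              gm Gm v1 v1 \<in> {1, -1} \<and> gm Gm v3 v3 \<in> {1, -1} \<and> gm Gm v2 v2 = 1 \<and>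
              lam \<noteq> 0 \<and>
              br v1 v2 = (gm Gm v3 v3 * lam) *\<^sub>R v3 \<and>
              br v3 v1 = 0 \<and>
              br v2 v3 = (gm Gm v1 v1 * lam) *\<^sub>R v1 \<and>
              Xm = v2 \<and> (Xp = Xm \<or> Xp = - Xm))
          \<or> (\<forall>x y. br x y = 0))"
  then have H0: "H = (\<lambda>x y z. 0)" and F0: "F = (\<lambda>x y. 0)" by blast+
  from R have c: "(\<exists>v1 v2 v3 (lam::real).
              gm Gm v1 v2 = 0 \<and> gm Gm v1 v3 = 0 \<and> gm Gm v2 v3 = 0 \<and>
              gm Gm v1 v1 \<in> {1, -1} \<and> gm Gm v3 v3 \<in> {1, -1} \<and> gm Gm v2 v2 = 1 \<and>
              lam \<noteq> 0 \<and>
              br v1 v2 = (gm Gm v3 v3 * lam) *\<^sub>R v3 \<and>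
              br v3 v1 = 0 \<and>
              br v2 v3 = (gm Gm v1 v1 * lam) *\<^sub>R v1 \<and>
              Xm = v2 \<and> (Xp = Xm \<or> Xp = - Xm))
          \<or> (\<forall>x y. br x y = 0)" by blast
  show "Bn_gen_pseudo_Kahler br H F (std_gen_metric Gm) (struct_of_components Gm Jp Jm Xp Xm)"
    unfolding H0 F0 by (rule reverse[OF comps lie c])
qed

end
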